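(* Consider a sequence of matched studies indexed by $I\to\infty$ with set sizes $n_i\ge2$ and assume Fisher's null $H_0$ holds. Let $1\le k\le I$ and $\Gamma_0\in[1,\infty)$ (possibly depending on $I$) with $\Gamma^\star_{(k)}\le\Gamma_0$, and suppose Conditions A1, A3 and A4 hold. Then for every $c\ge0$, $$\limsup_{I\to\infty}\mathbb P\{T\ge\mu(\Gamma_0;k)+c\,\sigma(\Gamma_0;k)\}\le1-\Phi(c).$$
   Context: Setting: $I$ matched sets, set $i$ has $n_i\ge2$ units; potential outcomes fixed; $Z$ (one treated unit per set) random with true mechanism $\mathbb P(Z=z)=\prod_i\prod_j(p^\star_{ij})^{z_{ij}}$, $\sum_jp^\star_{ij}=1$; $\Gamma^\star_i=\max_jp^\star_{ij}/\min_kp^\star_{ik}\in[1,\infty]$, $\Gamma^\star_{(k)}$ its $k$th smallest value; $\mathcal I^\star_k$ = indices of $k$ sets with the smallest $\Gamma^\star_i$. $H_0$: $Y_{ij}(1)=Y_{ij}(0)$ for all $i,j$. $T=\sum_iT_i$, $T_i=\sum_jZ_{ij}q_{ij}$, $q_{ij}$ fixed functions of $Y(0)$; true $\mu_i=\mathbb ET_i$, $v_i^2=\mathrm{Var}T_i$. Sort $q_{i(1)}\le\dots\le q_{i(n_i)}$, $R_i=q_{i(n_i)}-q_{i(1)}$. For $\Gamma_i<\infty$, $1\le a\le n_i-1$: $\mu_{ia}(\Gamma_i)=\frac{\sum_{j\le a}q_{i(j)}+\Gamma_i\sum_{j>a}q_{i(j)}}{a+\Gamma_i(n_i-a)}$,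 $v_{ia}^2(\Gamma_i)=\frac{\sum_{j\le a}q_{i(j)}^2+\Gamma_i\sum_{j>a}q_{i(j)}^2}{a+\Gamma_i(n_i-a)}-\mu_{ia}(\Gamma_i)^2$; $\mu_i(\Gamma_i)=\max_a\mu_{ia}(\Gamma_i)$, $v_i^2(\Gamma_i)=\max\{v_{ia}^2(\Gamma_i):\mu_{ia}(\Gamma_i)=\mu_i(\Gamma_i)\}$; $\mu_i(\infty)=q_{i(n_i)}$, $v_i^2(\infty)=0$. Rank the sets by increasing $\mu_i(\infty)-\mu_i(\Gamma_0)$, breaking ties so that sets with larger $v_i^2(\Gamma_0)$ come first; $\mathcal I_{\Gamma_0;k}$ is the first $k$ sets. $\mu(\Gamma_0;k)=\sum_{i\in\mathcal I_{\Gamma_0;k}}\mu_i(\Gamma_0)+\sum_{i\notin\mathcal I_{\Gamma_0;k}}q_{i(n_i)}$, $\sigma^2(\Gamma_0;k)=\sum_{i\in\mathcal I_{\Gamma_0;k}}v_i^2(\Gamma_0)$. For $\Gamma\in[1,\infty]^I$: $\mathcal A_\Gamma=\{i:v_i^2>v_i^2(\Gamma_i)\}$, $\Delta_\mu(\Gamma)=|\mathcal A_\Gamma|^{-1}\sum_{i\in\mathcal A_\Gamma}\{\mu_i(\Gamma_i)-\mu_i\}$, $\Delta_{v^2}(\Gamma)=|\mathcal A_\Gamma|^{-1}\sum_{i\in\mathcal A_\Gamma}\{v_i^2-v_i^2(\Gamma_i)\}$ (ratio $\infty$ if empty). Condition A1: $(\max_iR_i^2)/\sum_iR_i^2/(n_i\Gamma^\star_i)^3\to0$.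 Condition A3: with $\Gamma=\Gamma_0\mathbf 1_{\mathcal I^\star_k}+\infty\cdot\mathbf 1_{(\mathcal I^\star_k)^c}$ (entries $\Gamma_0$ on $\mathcal I^\star_k$, $\infty$ elsewhere), $\frac{\Delta_\mu(\Gamma)}{\Delta_{v^2}(\Gamma)}\sqrt{\sum_iR_i^2/(n_i\Gamma^\star_i)^3}\to\infty$. Condition A4: with $\mathcal B_k(\Gamma_0)=\{(i,j):v_i^2(\Gamma_0)<v_j^2(\Gamma_0),\ i\in\mathcal I_{\Gamma_0;k}\setminus\mathcal I^\star_k,\ j\in\mathcal I^\star_k\setminus\mathcal I_{\Gamma_0;k}\}$, $\Delta_\mu(\Gamma_0;k)=|\mathcal B_k|^{-1}\sum_{(i,j)\in\mathcal B_k}[\{\mu_j(\infty)-\mu_j(\Gamma_0)\}-\{\mu_i(\infty)-\mu_i(\Gamma_0)\}]$, $\Delta_{v^2}(\Gamma_0;k)=|\mathcal B_k|^{-1}\sum_{(i,j)\in\mathcal B_k}\{v_j^2(\Gamma_0)-v_i^2(\Gamma_0)\}$ (ratio $\infty$ if $\mathcal B_k$ empty), $\frac{\Delta_\mu(\Gamma_0;k)}{\Delta_{v^2}(\Gamma_0;k)}\sqrt{\sum_{i\in\mathcal I^\star_k}R_i^2/(n_i\Gamma_0)^3}\to\infty$. All quantities may depend on $I$; $\Phi$ is the standard normal CDF. *)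

theory Defs
  imports "HOL-Probability.Probability"
begin

definition Phi :: "real \<Rightarrow> real" where
  "Phi = cdf std_normal_distribution"

text \<open>All per-set quantities take the statistic values q :: nat => real of the
  units 0..<n of one matched set (and the true treatment probabilities p).\<close>

text \<open>Sorted statistics: qsrt q n ! (j-1) is q_{i(j)} (0-based list).\<close>
definition qsrt :: "(nat \<Rightarrow> real) \<Rightarrow> nat \<Rightarrow> real list" where
  "qsrt q n = sort (map q [0..<n])"

definition Rng :: "(nat \<Rightarrow> real) \<Rightarrow> nat \<Rightarrow> real" where
  "Rng q n = qsrt q n ! (n - 1) - qsrt q n ! 0"

definition mu_a :: "(nat \<Rightarrow> real) \<Rightarrow> nat \<Rightarrow> real \<Rightarrow> nat \<Rightarrow> real" where
  "mu_a q n G a =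
     ((\<Sum>j<a. qsrt q n ! j) + G * (\<Sum>j\<in>{a..<n}. qsrt q n ! j)) / (real a + G * real (n - a))"

definition v2_a :: "(nat \<Rightarrow> real) \<Rightarrow> nat \<Rightarrow> real \<Rightarrow> nat \<Rightarrow> real" where
  "v2_a q n G a =
     ((\<Sum>j<a. (qsrt q n ! j)^2) + G * (\<Sum>j\<in>{a..<n}. (qsrt q n ! j)^2)) / (real a + G * real (n - a))
     - (mu_a q n G a)^2"

definition mu_fin :: "(nat \<Rightarrow> real) \<Rightarrow> nat \<Rightarrow> real \<Rightarrow> real" where
  "mu_fin q n G = Max (mu_a q n G ` {1..n-1})"

definition v2_fin :: "(nat \<Rightarrow> real) \<Rightarrow> nat \<Rightarrow> real \<Rightarrow> real" where
  "v2_fin q n G = Max (v2_a q n G ` {a \<in> {1..n-1}. mu_a q n G a = mu_fin q n G})"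

definition muG :: "(nat \<Rightarrow> real) \<Rightarrow> nat \<Rightarrow> ereal \<Rightarrow> real" where
  "muG q n G = (if G = \<infinity> then qsrt q n ! (n - 1) else mu_fin q n (real_of_ereal G))"

definition v2G :: "(nat \<Rightarrow> real) \<Rightarrow> nat \<Rightarrow> ereal \<Rightarrow> real" where
  "v2G q n G = (if G = \<infinity> then 0 else v2_fin q n (real_of_ereal G))"

definition mu_true :: "(nat \<Rightarrow> real) \<Rightarrow> (nat \<Rightarrow> real) \<Rightarrow> nat \<Rightarrow> real" where
  "mu_true p q n = (\<Sum>j<n. p j * q j)"

definition v2_true :: "(nat \<Rightarrow> real) \<Rightarrow> (nat \<Rightarrow> real) \<Rightarrow> nat \<Rightarrow> real" where
  "v2_true p q n = (\<Sum>j<n. p j * (q j)^2) - (mu_true p q n)^2"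

definition GammaStar :: "(nat \<Rightarrow> real) \<Rightarrow> nat \<Rightarrow> ereal" where
  "GammaStar p n = (if Min (p ` {..<n}) = 0 then \<infinity>
                    else ereal (Max (p ` {..<n}) / Min (p ` {..<n})))"

definition kth_smallest :: "'a::linorder list \<Rightarrow> nat \<Rightarrow> 'a" where
  "kth_smallest xs k = sort xs ! (k - 1)"

definition wterm :: "real \<Rightarrow> nat \<Rightarrow> ereal \<Rightarrow> real" where
  "wterm R n G = (if G = \<infinity> then 0 else R^2 / (real n * real_of_ereal G)^3)"

text \<open>From here on, for a fixed study: I sets, n :: nat => nat set sizes,
  q :: nat => nat => real statistics q_ij, p :: nat => nat => real true probabilities.\<close>

definition Ssum :: "nat \<Rightarrow> (nat \<Rightarrow> nat) \<Rightarrow> (nat \<Rightarrow> nat \<Rightarrow> real) \<Rightarrow> (nat \<Rightarrow> nat \<Rightarrow> real) \<Rightarrow> real" where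
  "Ssum I n q p = (\<Sum>i<I. wterm (Rng (q i) (n i)) (n i) (GammaStar (p i) (n i)))"

text \<open>Exact probability P{T >= t} under the true mechanism (Fisher's null: T = sum of q of treated units).\<close>
definition prob_T_ge :: "nat \<Rightarrow> (nat \<Rightarrow> nat) \<Rightarrow> (nat \<Rightarrow> nat \<Rightarrow> real) \<Rightarrow> (nat \<Rightarrow> nat \<Rightarrow> real) \<Rightarrow> real \<Rightarrow> real" where
  "prob_T_ge I n q p t =
     (\<Sum>z\<in>PiE {..<I} (\<lambda>i. {..<n i}).
        (\<Prod>i<I. p i (z i)) * (if (\<Sum>i<I. q i (z i)) \<ge> t then 1 else 0))"

text \<open>J is a valid set I*_k: k sets with the smallest Gamma*_i (ties arbitrary).\<close>
definition is_Istar :: "nat \<Rightarrow> (nat \<Rightarrow> nat) \<Rightarrow> (nat \<Rightarrow> nat \<Rightarrow> real) \<Rightarrow> nat \<Rightarrow> nat set \<Rightarrow> bool" where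
  "is_Istar I n p k J \<longleftrightarrow> J \<subseteq> {..<I} \<and> card J = k \<and>
     (\<forall>i\<in>J. \<forall>j\<in>{..<I} - J. GammaStar (p i) (n i) \<le> GammaStar (p j) (n j))"

text \<open>J is a valid set I_{Gamma0;k}: the first k sets in the ranking by increasing
  mu_i(inf) - mu_i(Gamma0), ties broken by larger v_i^2(Gamma0) first (remaining ties arbitrary).\<close>
definition is_Irank :: "nat \<Rightarrow> (nat \<Rightarrow> nat) \<Rightarrow> (nat \<Rightarrow> nat \<Rightarrow> real) \<Rightarrow> real \<Rightarrow> nat \<Rightarrow> nat set \<Rightarrow> bool" where
  "is_Irank I n q G0 k J \<longleftrightarrow> J \<subseteq> {..<I} \<and> card J = k \<and>
     (\<forall>i\<in>J. \<forall>j\<in>{..<I} - J.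
        let di = muG (q i) (n i) \<infinity> - muG (q i) (n i) (ereal G0);
            dj = muG (q j) (n j) \<infinity> - muG (q j) (n j) (ereal G0)
        in di < dj \<or> (di = dj \<and> v2G (q i) (n i) (ereal G0) \<ge> v2G (q j) (n j) (ereal G0)))"

definition mu_Gk :: "nat \<Rightarrow> (nat \<Rightarrow> nat) \<Rightarrow> (nat \<Rightarrow> nat \<Rightarrow> real) \<Rightarrow> real \<Rightarrow> nat set \<Rightarrow> real" where
  "mu_Gk I n q G0 J = (\<Sum>i\<in>J. muG (q i) (n i) (ereal G0)) + (\<Sum>i\<in>{..<I} - J. qsrt (q i) (n i) ! (n i - 1))"

definition sigma2_Gk :: "(nat \<Rightarrow> nat) \<Rightarrow> (nat \<Rightarrow> nat \<Rightarrow> real) \<Rightarrow> real \<Rightarrow> nat set \<Rightarrow> real" where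
  "sigma2_Gk n q G0 J = (\<Sum>i\<in>J. v2G (q i) (n i) (ereal G0))"

definition A1_ratio :: "nat \<Rightarrow> (nat \<Rightarrow> nat) \<Rightarrow> (nat \<Rightarrow> nat \<Rightarrow> real) \<Rightarrow> (nat \<Rightarrow> nat \<Rightarrow> real) \<Rightarrow> real" where
  "A1_ratio I n q p = Max ((\<lambda>i. (Rng (q i) (n i))^2) ` {..<I}) / Ssum I n q p"

definition A_set :: "nat \<Rightarrow> (nat \<Rightarrow> nat) \<Rightarrow> (nat \<Rightarrow> nat \<Rightarrow> real) \<Rightarrow> (nat \<Rightarrow> nat \<Rightarrow> real) \<Rightarrow> (nat \<Rightarrow> ereal) \<Rightarrow> nat set" where
  "A_set I n q p G = {i \<in> {..<I}. v2_true (p i) (q i) (n i) > v2G (q i) (n i) (G i)}"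

definition Delta_mu :: "nat \<Rightarrow> (nat \<Rightarrow> nat) \<Rightarrow> (nat \<Rightarrow> nat \<Rightarrow> real) \<Rightarrow> (nat \<Rightarrow> nat \<Rightarrow> real) \<Rightarrow> (nat \<Rightarrow> ereal) \<Rightarrow> real" where
  "Delta_mu I n q p G = (let A = A_set I n q p G in
     (\<Sum>i\<in>A. muG (q i) (n i) (G i) - mu_true (p i) (q i) (n i)) / real (card A))"

definition Delta_v2 :: "nat \<Rightarrow> (nat \<Rightarrow> nat) \<Rightarrow> (nat \<Rightarrow> nat \<Rightarrow> real) \<Rightarrow> (nat \<Rightarrow> nat \<Rightarrow> real) \<Rightarrow> (nat \<Rightarrow> ereal) \<Rightarrow> real" where
  "Delta_v2 I n q p G = (let A = A_set I n q p G in
     (\<Sum>i\<in>A. v2_true (p i) (q i) (n i) - v2G (q i) (n i) (G i)) / real (card A))"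

definition A3_quantity :: "nat \<Rightarrow> (nat \<Rightarrow> nat) \<Rightarrow> (nat \<Rightarrow> nat \<Rightarrow> real) \<Rightarrow> (nat \<Rightarrow> nat \<Rightarrow> real) \<Rightarrow> real \<Rightarrow> nat set \<Rightarrow> ereal" where
  "A3_quantity I n q p G0 Istar =
     (let G = (\<lambda>i. if i \<in> Istar then ereal G0 else \<infinity>) in
      if A_set I n q p G = {} then \<infinity>
      else ereal (Delta_mu I n q p G / Delta_v2 I n q p G * sqrt (Ssum I n q p)))"

definition B_set :: "(nat \<Rightarrow> nat) \<Rightarrow> (nat \<Rightarrow> nat \<Rightarrow> real) \<Rightarrow> real \<Rightarrow> nat set \<Rightarrow> nat set \<Rightarrow> (nat \<times> nat) set" where
  "B_set n q G0 Irank Istar = {(i, j). i \<in> Irank - Istar \<and> j \<in> Istar - Irank \<and>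
      v2G (q i) (n i) (ereal G0) < v2G (q j) (n j) (ereal G0)}"

definition A4_quantity :: "(nat \<Rightarrow> nat) \<Rightarrow> (nat \<Rightarrow> nat \<Rightarrow> real) \<Rightarrow> real \<Rightarrow> nat set \<Rightarrow> nat set \<Rightarrow> ereal" where
  "A4_quantity n q G0 Irank Istar =
     (let B = B_set n q G0 Irank Istar;
          d = (\<lambda>i. muG (q i) (n i) \<infinity> - muG (q i) (n i) (ereal G0));
          v = (\<lambda>i. v2G (q i) (n i) (ereal G0));
          Dmu = (\<Sum>(i, j)\<in>B. d j - d i) / real (card B);
          Dv = (\<Sum>(i, j)\<in>B. v j - v i) / real (card B)
      in if B = {} then \<infinity>
         else ereal (Dmu / Dv * sqrt (\<Sum>i\<in>Istar. (Rng (q i) (n i))^2 / (real (n i) * G0)^3)))"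

end

theory Submission
  imports Defs
begin

lemma split_sum_if:
  fixes f g :: "nat \<Rightarrow> real"
  assumes "a \<le> n"
  shows "(\<Sum>k<n. (if k < a then f k else g k)) = (\<Sum>k<a. f k) + (\<Sum>k\<in>{a..<n}. g k)"
proof -
  have "{..<n} = {..<a} \<union> {a..<n}" using assms by auto
  then have "(\<Sum>k<n. (if k < a then f k else g k)) =
      (\<Sum>k<a. (if k < a then f k else g k)) + (\<Sum>k\<in>{a..<n}. (if k < a then f k else g k))"
    by (simp add: sum.union_disjoint ivl_disj_int)
  also have "(\<Sum>k<a. (if k < a then f k else g k)) = (\<Sum>k<a. f k)" by (rule sum.cong) auto
  also have "(\<Sum>k\<in>{a..<n}. (if k < a then f k else g k)) = (\<Sum>k\<in>{a..<n}. g k)" by (rule sum.cong) auto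
  finally show ?thesis .
qed

lemma qsrt_length [simp]: "length (qsrt q n) = n"
  by (simp add: qsrt_def)

lemma qsrt_sorted: "sorted (qsrt q n)"
  by (simp add: qsrt_def)

lemma qsrt_set: "set (qsrt q n) = q ` {..<n}"
  by (auto simp: qsrt_def)

lemma qsrt_mono: "i \<le> j \<Longrightarrow> j < n \<Longrightarrow> qsrt q n ! i \<le> qsrt q n ! j"
  using qsrt_sorted[of q n] by (simp add: sorted_nth_mono)

lemma qsrt_bounds:
  assumes "j < n"
  shows "qsrt q n ! 0 \<le> q j" "q j \<le> qsrt q n ! (n - 1)"
proof -
  have "q j \<in> set (qsrt q n)" using assms qsrt_set[of q n] by auto
  then obtain k where k: "k < n" "qsrt q n ! k = q j" by (auto simp: in_set_conv_nth)
  show "qsrt q n ! 0 \<le> q j" using k qsrt_mono[of 0 k n q] by auto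
  show "q j \<le> qsrt q n ! (n - 1)" using k qsrt_mono[of k "n-1" n q] by auto
qed

lemma qsrt_attained:
  assumes "k < n"
  shows "\<exists>j<n. qsrt q n ! k = q j"
proof -
  have "qsrt q n ! k \<in> set (qsrt q n)" using assms by simp
  then show ?thesis using qsrt_set[of q n] by auto
qed

lemma qsrt_sum:
  fixes f :: "real \<Rightarrow> real"
  shows "(\<Sum>k<n. f (qsrt q n ! k)) = (\<Sum>j<n. f (q j))"
proof -
  have "mset (map f (qsrt q n)) = mset (map f (map q [0..<n]))"
    by (simp add: qsrt_def multiset.map_comp)
  then have "sum_list (map f (qsrt q n)) = sum_list (map f (map q [0..<n]))"
    by (metis sum_mset_sum_list)
  moreover have "sum_list (map f (qsrt q n)) = (\<Sum>k<n. f (qsrt q n ! k))"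
    by (simp add: sum_list_sum_nth atLeast0LessThan)
  moreover have "sum_list (map f (map q [0..<n])) = (\<Sum>j<n. f (q j))"
    by (simp add: sum_list_sum_nth atLeast0LessThan)
  ultimately show ?thesis by simp
qed

lemma var_form:
  fixes w x :: "nat \<Rightarrow> real"
  assumes "(\<Sum>j<n. w j) = 1"
  shows "(\<Sum>j<n. w j * (x j)^2) - (\<Sum>j<n. w j * x j)^2
       = (\<Sum>j<n. w j * (x j - (\<Sum>j<n. w j * x j))^2)"
proof -
  define mu where "mu = (\<Sum>j<n. w j * x j)"
  have "(\<Sum>j<n. w j * (x j - mu)^2) = (\<Sum>j<n. w j * (x j)^2 - 2 * mu * (w j * x j) + mu^2 * w j)"
    by (rule sum.cong) (auto simp: power2_diff algebra_simps)
  also have "\<dots> = (\<Sum>j<n. w j * (x j)^2) - 2 * mu * mu + mu^2 * (\<Sum>j<n. w j)"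
    by (simp add: sum.distrib sum_subtractf sum_distrib_left mu_def)
  also have "\<dots> = (\<Sum>j<n. w j * (x j)^2) - mu^2" using assms by (simp add: power2_eq_square)
  finally show ?thesis by (simp add: mu_def)
qed

lemma var_lower:
  fixes w x :: "nat \<Rightarrow> real"
  assumes "\<And>j. j < n \<Longrightarrow> w j \<ge> 0" "a < n" "b < n" "a \<noteq> b" "w a \<ge> m" "w b \<ge> m" "m \<ge> 0"
  shows "(\<Sum>j<n. w j * (x j - mu)^2) \<ge> m * (x a - x b)^2 / 2"
proof -
  have "(\<Sum>j\<in>{a,b}. w j * (x j - mu)^2) \<le> (\<Sum>j<n. w j * (x j - mu)^2)"
    by (rule sum_mono2) (use assms in auto)
  moreover have "(\<Sum>j\<in>{a,b}. w j * (x j - mu)^2) = w a * (x a - mu)^2 + w b * (x b - mu)^2"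
    using assms by simp
  moreover have "w a * (x a - mu)^2 \<ge> m * (x a - mu)^2" using assms by (simp add: mult_right_mono)
  moreover have "w b * (x b - mu)^2 \<ge> m * (x b - mu)^2" using assms by (simp add: mult_right_mono)
  moreover have "(x a - mu)^2 + (x b - mu)^2 \<ge> (x a - x b)^2 / 2"
  proof -
    have "0 \<le> (x a + x b - 2 * mu)^2" by simp
    then show ?thesis by (simp add: power2_eq_square field_simps)
  qed
  ultimately have h1: "(\<Sum>j<n. w j * (x j - mu)^2) \<ge> m * (x a - mu)^2 + m * (x b - mu)^2"
    and h2: "(x a - x b)^2 / 2 \<le> (x a - mu)^2 + (x b - mu)^2" by linarith+
  have "m * ((x a - x b)^2 / 2) \<le> m * ((x a - mu)^2 + (x b - mu)^2)"
    using h2 assms(7) by (rule mult_left_mono)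
  with h1 show ?thesis by (simp add: distrib_left)

qed

definition wa :: "nat \<Rightarrow> real \<Rightarrow> nat \<Rightarrow> nat \<Rightarrow> real" where
  "wa n G a k = (if k < a then 1 else G) / (real a + G * real (n - a))"

lemma D_pos: "1 \<le> a \<Longrightarrow> a \<le> n \<Longrightarrow> G \<ge> 1 \<Longrightarrow> real a + G * real (n - a) > 0"
proof -
  assume a: "1 \<le> a" "a \<le> n" "G \<ge> 1"
  have "G * real (n - a) \<ge> 0" using a by simp
  moreover have "real a \<ge> 1" using a by simp
  ultimately show ?thesis by linarith
qed

lemma D_le: "a \<le> n \<Longrightarrow> G \<ge> 1 \<Longrightarrow> real a + G * real (n - a) \<le> real n * G"
proof -
  assume a: "a \<le> n" "G \<ge> 1"
  have h1: "1 * real a \<le> G * real a" using mult_right_mono[of 1 G "real a"] a by simp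
  have h2: "real n = real a + real (n - a)" using a by simp
  have "real n * G = G * real a + G * real (n - a)" unfolding h2 by (simp add: algebra_simps)
  then show ?thesis using h1 by simp
qed

lemma wa_sum: assumes "1 \<le> a" "a \<le> n" "G \<ge> 1" shows "(\<Sum>k<n. wa n G a k) = 1"
proof -
  have "(\<Sum>k<n. wa n G a k) = (\<Sum>k<n. (if k < a then 1 else G)) / (real a + G * real (n - a))"
    unfolding wa_def by (rule sum_divide_distrib[symmetric])
  also have "(\<Sum>k<n. (if k < a then 1 else G)) = real a + G * real (n - a)"
    using split_sum_if[of a n "\<lambda>_. 1" "\<lambda>_. G"] assms by simp
  finally show ?thesis using D_pos[OF assms] by simp
qed

lemma wa_ge: assumes "1 \<le> a" "a \<le> n" "G \<ge> 1" shows "wa n G a k \<ge> 1 / (real n * G)"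
proof -
  define D where "D = real a + G * real (n - a)"
  have D: "0 < D" "D \<le> real n * G"
    using D_pos[OF assms] D_le[of a n G] assms by (auto simp: D_def)
  have "0 < real n * G" using D by linarith
  then have p: "0 < real n * G * D" using D by simp
  have "1 / (real n * G) \<le> 1 / D"
    using divide_left_mono[OF D(2) _ p, of 1] by simp
  also have "1 / D \<le> (if k < a then 1 else G) / D"
    using divide_right_mono[of 1 "(if k < a then 1 else G)" D] assms D by simp
  also have "\<dots> = wa n G a k" by (simp add: wa_def D_def)
  finally show ?thesis .
qed

lemma wa_nonneg: assumes "1 \<le> a" "a \<le> n" "G \<ge> 1" shows "wa n G a k \<ge> 0"
proof -
  have "0 \<le> 1 / (real n * G)" using assms by simp
  then show ?thesis using wa_ge[OF assms, of k] by linarith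
qed

lemma mu_a_weighted:
  assumes "1 \<le> a" "a \<le> n" "G \<ge> 1"
  shows "mu_a q n G a = (\<Sum>k<n. wa n G a k * qsrt q n ! k)"
proof -
  have "(\<Sum>k<n. wa n G a k * qsrt q n ! k) =
        (\<Sum>k<n. (if k < a then qsrt q n ! k else G * qsrt q n ! k)) / (real a + G * real (n - a))"
    by (simp add: wa_def sum_divide_distrib) (rule sum.cong, auto)
  also have "(\<Sum>k<n. (if k < a then qsrt q n ! k else G * qsrt q n ! k)) =
      (\<Sum>k<a. qsrt q n ! k) + G * (\<Sum>k\<in>{a..<n}. qsrt q n ! k)"
    using split_sum_if[OF assms(2)] by (simp add: sum_distrib_left)
  finally show ?thesis by (simp add: mu_a_def)
qed

lemma v2_a_weighted:
  assumes "1 \<le> a" "a \<le> n" "G \<ge> 1"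
  shows "v2_a q n G a = (\<Sum>k<n. wa n G a k * (qsrt q n ! k)^2) - (mu_a q n G a)^2"
proof -
  have "(\<Sum>k<n. wa n G a k * (qsrt q n ! k)^2) =
        (\<Sum>k<n. (if k < a then (qsrt q n ! k)^2 else G * (qsrt q n ! k)^2)) / (real a + G * real (n - a))"
    by (simp add: wa_def sum_divide_distrib) (rule sum.cong, auto)
  also have "(\<Sum>k<n. (if k < a then (qsrt q n ! k)^2 else G * (qsrt q n ! k)^2)) =
      (\<Sum>k<a. (qsrt q n ! k)^2) + G * (\<Sum>k\<in>{a..<n}. (qsrt q n ! k)^2)"
    using split_sum_if[OF assms(2)] by (simp add: sum_distrib_left)
  finally show ?thesis by (simp add: v2_a_def)
qed

lemma v2_a_lower:
  assumes "1 \<le> a" "a \<le> n" "G \<ge> 1" "n \<ge> 2"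
  shows "v2_a q n G a \<ge> (1 / (real n * G)) * (Rng q n)^2 / 2"
proof -
  let ?y = "\<lambda>k. qsrt q n ! k"
  note e1 = v2_a_weighted[OF assms(1-3), of q]
  note e2 = mu_a_weighted[OF assms(1-3), of q]
  note e3 = var_form[OF wa_sum[OF assms(1-3)], of ?y]
  have "v2_a q n G a = (\<Sum>k<n. wa n G a k * (?y k - mu_a q n G a)^2)"
    by (simp only: e1 e2 e3)
  also have "\<dots> \<ge> (1 / (real n * G)) * (?y (n - 1) - ?y 0)^2 / 2"
    by (rule var_lower) (use assms wa_ge[OF assms(1-3)] wa_nonneg[OF assms(1-3)] in auto)
  finally show ?thesis by (simp add: Rng_def)
qed

lemma mu_fin_ge:
  assumes "a \<in> {1..n-1}"
  shows "mu_a q n G a \<le> mu_fin q n G"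
  unfolding mu_fin_def using assms by (intro Max_ge) auto

lemma v2_fin_lower:
  assumes "G \<ge> 1" "n \<ge> 2"
  shows "v2_fin q n G \<ge> (1 / (real n * G)) * (Rng q n)^2 / 2"
proof -
  have ne: "{1..n-1} \<noteq> {}" using assms by auto
  have "mu_fin q n G \<in> mu_a q n G ` {1..n-1}" unfolding mu_fin_def
    using ne by (intro Max_in) auto
  then obtain a where a: "a \<in> {1..n-1}" "mu_a q n G a = mu_fin q n G" by auto
  have "v2_a q n G a \<le> v2_fin q n G" unfolding v2_fin_def
    using a by (intro Max_ge) auto
  moreover have "v2_a q n G a \<ge> (1 / (real n * G)) * (Rng q n)^2 / 2"
    using a assms by (intro v2_a_lower) auto
  ultimately show ?thesis by linarith
qed

lemma v2_fin_nonneg: "G \<ge> 1 \<Longrightarrow> n \<ge> 2 \<Longrightarrow> v2_fin q n G \<ge> 0"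
proof -
  assume a: "G \<ge> 1" "n \<ge> 2"
  have "0 < real n * G" using a by simp
  then have "0 \<le> 1 / (real n * G)" by simp
  then have "0 \<le> (1 / (real n * G)) * (Rng q n)^2"
    by (rule mult_nonneg_nonneg) simp
  then have "0 \<le> (1 / (real n * G)) * (Rng q n)^2 / 2" by (rule divide_nonneg_nonneg) simp
  then show ?thesis using v2_fin_lower[OF a, of q] by linarith
qed

lemma cube_bound:
  fixes x R :: real
  assumes x2: "x \<ge> 2"
  shows "R^2 / x^3 \<le> (1 / x) * R^2 / 2"
proof -
  have "2 * 2 \<le> x * x" using mult_mono[of 2 x 2 x] x2 by simp
  then have "x * (2 * 2) \<le> x * (x * x)" using mult_left_mono[of "2*2" "x*x" x] x2 by simp
  moreover have "2 * x \<le> x * (2 * 2)" using x2 by simp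
  ultimately have h0: "2 * x \<le> x * (x * x)" by linarith
  have e: "x^3 = x * (x * x)" by (simp add: power3_eq_cube)
  have h: "2 * x \<le> x^3" unfolding e by (rule h0)
  have p: "0 < x^3 * (2 * x)" using x2 by simp
  have "R^2 / x^3 \<le> R^2 / (2 * x)" using divide_left_mono[OF h _ p, of "R^2"] by simp
  also have "R^2 / (2 * x) = (1 / x) * R^2 / 2" by simp
  finally show ?thesis .
qed

lemma v2_fin_wterm:
  assumes "G \<ge> 1" "n \<ge> 2"
  shows "v2_fin q n G \<ge> (Rng q n)^2 / (real n * G)^3"
proof -
  have "real n * 1 \<le> real n * G" using assms mult_left_mono[of 1 G "real n"] by simp
  moreover have "real n \<ge> 2" using assms by simp
  ultimately have "real n * G \<ge> 2" by linarith
  then have "(Rng q n)^2 / (real n * G)^3 \<le> (1 / (real n * G)) * (Rng q n)^2 / 2"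
    by (rule cube_bound)
  then show ?thesis using v2_fin_lower[OF assms, of q] by linarith
qed

lemma sens:
  fixes p q :: "nat \<Rightarrow> real"
  assumes n2: "n \<ge> 2" and mpos: "m > 0" and pm: "\<And>j. j < n \<Longrightarrow> m \<le> p j"
    and pG: "\<And>j. j < n \<Longrightarrow> p j \<le> G * m" and ps: "(\<Sum>j<n. p j) = 1" and G1: "G \<ge> 1"
  shows "(\<Sum>j<n. p j * q j) \<le> mu_fin q n G"
proof -
  define mu where "mu = (\<Sum>j<n. p j * q j)"
  define g where "g y = (if 0 \<le> y then G * y else y)" for y :: real
  let ?y = "\<lambda>k. qsrt q n ! k"
  have "(\<Sum>j<n. p j * (q j - mu)) = (\<Sum>j<n. p j * q j) - (\<Sum>j<n. mu * p j)"
    by (simp add: right_diff_distrib sum_subtractf mult.commute)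
  also have "\<dots> = mu - mu * (\<Sum>j<n. p j)" by (simp add: sum_distrib_left mu_def)
  finally have "(\<Sum>j<n. p j * (q j - mu)) = mu - mu * (\<Sum>j<n. p j)" .
  then have s0: "(\<Sum>j<n. p j * (q j - mu)) = 0" using ps by simp
  have "p j * (q j - mu) \<le> m * g (q j - mu)" if "j < n" for j
  proof (cases "0 \<le> q j - mu")
    case True
    have "p j * (q j - mu) \<le> (G * m) * (q j - mu)" using mult_right_mono[OF pG[OF that] True] .
    then show ?thesis using True by (simp add: g_def mult_ac)
  next
    case False
    then have "m * (q j - mu) \<ge> p j * (q j - mu)" using pm[OF that]
      by (intro mult_right_mono_neg) auto
    then show ?thesis using False by (simp add: g_def)
  qed
  then have "(\<Sum>j<n. p j * (q j - mu)) \<le> (\<Sum>j<n. m * g (q j - mu))" by (intro sum_mono) simp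
  then have "0 \<le> (\<Sum>j<n. m * g (q j - mu))" using s0 by linarith
  then have "0 \<le> m * (\<Sum>j<n. g (q j - mu))" by (simp add: sum_distrib_left)
  then have sg: "0 \<le> (\<Sum>k<n. g (?y k - mu))"
    using mpos qsrt_sum[of "\<lambda>x. g (x - mu)" q n] by (simp add: zero_le_mult_iff)
  have "\<exists>a. a \<in> {1..n-1} \<and> 0 \<le> (\<Sum>k<a. ?y k - mu) + G * (\<Sum>k\<in>{a..<n}. ?y k - mu)"
  proof (cases "\<exists>k<n. mu \<le> ?y k")
    case False
    then have "(\<Sum>k<n. g (?y k - mu)) = (\<Sum>k<n. ?y k - mu)" by (intro sum.cong) (auto simp: g_def)
    also have "\<dots> < (\<Sum>k<n. 0)" using False n2 by (intro sum_strict_mono) (auto simp: lessThan_empty_iff)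
    also have "\<dots> = 0" by simp
    finally show ?thesis using sg by simp
  next
    case True
    define a0 where "a0 = (LEAST k. k < n \<and> mu \<le> ?y k)"
    have a0: "a0 < n" "mu \<le> ?y a0" using LeastI_ex[OF True] unfolding a0_def by auto
    have below: "?y k < mu" if "k < a0" for k
      using not_less_Least[OF that[unfolded a0_def]] that a0 by auto
    have above: "mu \<le> ?y k" if "a0 \<le> k" "k < n" for k
      using a0 qsrt_mono[OF that, of q] by linarith
    show ?thesis
    proof (cases "a0 = 0")
      case True
      have "0 \<le> (\<Sum>k<1. ?y k - mu)" using above True n2 by simp
      moreover have "0 \<le> (\<Sum>k\<in>{1..<n}. ?y k - mu)" using above True by (intro sum_nonneg) auto
      ultimately show ?thesis using n2 G1 by (intro exI[of _ 1]) auto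
    next
      case False
      have "(\<Sum>k<n. g (?y k - mu)) = (\<Sum>k<n. (if k < a0 then ?y k - mu else G * (?y k - mu)))"
      proof (intro sum.cong refl)
        fix k assume k: "k \<in> {..<n}"
        show "g (?y k - mu) = (if k < a0 then ?y k - mu else G * (?y k - mu))"
        proof (cases "k < a0")
          case True
          then have "?y k < mu" by (rule below)
          then show ?thesis using True by (simp add: g_def)
        next
          case False
          then have "mu \<le> ?y k" using above k by simp
          then show ?thesis using False by (simp add: g_def)
        qed
      qed
      also have "\<dots> = (\<Sum>k<a0. ?y k - mu) + (\<Sum>k\<in>{a0..<n}. G * (?y k - mu))"
        using a0 by (intro split_sum_if) auto
      finally show ?thesis using sg False a0 by (intro exI[of _ a0]) (auto simp: sum_distrib_left)
    qed
  qed
  then obtain a where a: "a \<in> {1..n-1}"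
    and h: "0 \<le> (\<Sum>k<a. ?y k - mu) + G * (\<Sum>k\<in>{a..<n}. ?y k - mu)" by blast
  have D: "real a + G * real (n - a) > 0" using a G1 by (intro D_pos) auto
  have "(\<Sum>k<a. ?y k - mu) + G * (\<Sum>k\<in>{a..<n}. ?y k - mu)
        = ((\<Sum>k<a. ?y k) + G * (\<Sum>k\<in>{a..<n}. ?y k)) - mu * (real a + G * real (n - a))"
    by (simp add: sum_subtractf algebra_simps)
  then have "mu * (real a + G * real (n - a)) \<le> (\<Sum>k<a. ?y k) + G * (\<Sum>k\<in>{a..<n}. ?y k)"
    using h by linarith
  then have "mu \<le> mu_a q n G a" unfolding mu_a_def using D by (simp add: pos_le_divide_eq)
  also have "\<dots> \<le> mu_fin q n G" using a by (rule mu_fin_ge)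
  finally show ?thesis by (simp add: mu_def)
qed

lemma pminmax:
  fixes p :: "nat \<Rightarrow> real"
  assumes "n \<ge> 2" "j < n"
  shows "Min (p ` {..<n}) \<le> p j" "p j \<le> Max (p ` {..<n})"
  using assms by (auto intro!: Min_le Max_ge simp: lessThan_empty_iff)

lemma pmin_in: "(n::nat) \<ge> 2 \<Longrightarrow> \<exists>j<n. Min ((p::nat\<Rightarrow>real) ` {..<n}) = p j"
proof -
  assume "n \<ge> 2"
  then have "Min (p ` {..<n}) \<in> p ` {..<n}" by (intro Min_in) (auto simp: lessThan_empty_iff)
  then show ?thesis by auto
qed

lemma pmax_ge:
  fixes p :: "nat \<Rightarrow> real"
  assumes "n \<ge> 2" "(\<Sum>j<n. p j) = 1"
  shows "1 / real n \<le> Max (p ` {..<n})"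
proof -
  have "(\<Sum>j<n. p j) \<le> (\<Sum>j<n. Max (p ` {..<n}))"
    by (intro sum_mono pminmax(2)) (use assms in auto)
  then have "1 \<le> real n * Max (p ` {..<n})" using assms by simp
  then show ?thesis using assms by (simp add: divide_le_eq mult.commute)
qed

lemma pmin_nonneg:
  fixes p :: "nat \<Rightarrow> real"
  assumes "n \<ge> 2" "\<And>j. j < n \<Longrightarrow> p j \<ge> 0"
  shows "Min (p ` {..<n}) \<ge> 0"
proof -
  obtain j where "j < n" "Min (p ` {..<n}) = p j" using pmin_in[OF assms(1), of p] by blast
  then show ?thesis using assms(2)[of j] by simp
qed

lemma gs_fin:
  fixes p :: "nat \<Rightarrow> real"
  assumes n2: "n \<ge> 2" and pn: "\<And>j. j < n \<Longrightarrow> p j \<ge> 0"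
    and gs: "GammaStar p n \<le> ereal G0"
  shows "Min (p ` {..<n}) > 0" "Max (p ` {..<n}) \<le> G0 * Min (p ` {..<n})"
proof -
  let ?m = "Min (p ` {..<n})" and ?M = "Max (p ` {..<n})"
  have ne: "?m \<noteq> 0" using gs unfolding GammaStar_def by (auto split: if_splits)
  moreover have "?m \<ge> 0" by (rule pmin_nonneg[OF n2 pn])
  ultimately show mp: "?m > 0" by linarith
  have "?M / ?m \<le> G0" using gs ne unfolding GammaStar_def by simp
  then show "?M \<le> G0 * ?m" using mp by (simp add: divide_le_eq)
qed

lemma mu_true_le:
  fixes p q :: "nat \<Rightarrow> real"
  assumes n2: "n \<ge> 2" and pn: "\<And>j. j < n \<Longrightarrow> p j \<ge> 0" and ps: "(\<Sum>j<n. p j) = 1"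
    and gs: "GammaStar p n \<le> ereal G0"
  shows "mu_true p q n \<le> mu_fin q n G0" "G0 \<ge> 1"
proof -
  let ?m = "Min (p ` {..<n})" and ?M = "Max (p ` {..<n})"
  note g = gs_fin[OF n2 pn gs]
  have "?m \<le> ?M" using pminmax[OF n2, of 0 p] n2 by linarith
  then have "1 * ?m \<le> G0 * ?m" using g by linarith
  then show G1: "G0 \<ge> 1" using g(1) by (simp add: mult_le_cancel_right)
  show "mu_true p q n \<le> mu_fin q n G0" unfolding mu_true_def
  proof (rule sens[OF n2 g(1)])
    show "\<And>j. j < n \<Longrightarrow> ?m \<le> p j" using pminmax[OF n2] by blast
    show "\<And>j. j < n \<Longrightarrow> p j \<le> G0 * ?m" using pminmax[OF n2] g(2) by (meson order_trans)
  qed (use ps G1 in auto)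
qed

lemma v2_true_var:
  fixes p q :: "nat \<Rightarrow> real"
  assumes ps: "(\<Sum>j<n. p j) = 1"
  shows "v2_true p q n = (\<Sum>j<n. p j * (q j - mu_true p q n)^2)"
  unfolding v2_true_def mu_true_def using var_form[OF ps, of q] by simp

lemma v2_true_nonneg:
  fixes p q :: "nat \<Rightarrow> real"
  assumes ps: "(\<Sum>j<n. p j) = 1" and pn: "\<And>j. j < n \<Longrightarrow> p j \<ge> 0"
  shows "v2_true p q n \<ge> 0"
  unfolding v2_true_var[OF ps] using pn by (intro sum_nonneg mult_nonneg_nonneg) auto

lemma v2_true_lower:
  fixes p q :: "nat \<Rightarrow> real"
  assumes n2: "n \<ge> 2" and ps: "(\<Sum>j<n. p j) = 1" and pn: "\<And>j. j < n \<Longrightarrow> p j \<ge> 0"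
  shows "v2_true p q n \<ge> Min (p ` {..<n}) * (Rng q n)^2 / 2"
proof -
  obtain a where a: "a < n" "qsrt q n ! 0 = q a" using qsrt_attained[of 0 n q] n2 by auto
  obtain b where b: "b < n" "qsrt q n ! (n - 1) = q b" using qsrt_attained[of "n-1" n q] n2 by auto
  have R: "Rng q n = q b - q a" using a b by (simp add: Rng_def)
  show ?thesis
  proof (cases "a = b")
    case True
    then have "Rng q n = 0" using R by simp
    then show ?thesis using v2_true_nonneg[OF ps pn, of q] by simp
  next
    case False
    have "Min (p ` {..<n}) * (q b - q a)^2 / 2 \<le> (\<Sum>j<n. p j * (q j - mu_true p q n)^2)"
      by (rule var_lower) (use pn a b False pminmax[OF n2] pmin_nonneg[OF n2 pn] in auto)
    then show ?thesis using R v2_true_var[OF ps, of q] by simp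
  qed
qed

lemma wterm_le_v2_true:
  fixes p q :: "nat \<Rightarrow> real"
  assumes n2: "n \<ge> 2" and ps: "(\<Sum>j<n. p j) = 1" and pn: "\<And>j. j < n \<Longrightarrow> p j \<ge> 0"
  shows "wterm (Rng q n) n (GammaStar p n) \<le> v2_true p q n"
proof (cases "Min (p ` {..<n}) = 0")
  case True
  then show ?thesis using v2_true_nonneg[OF ps pn, of q] by (simp add: wterm_def GammaStar_def)
next
  case False
  let ?m = "Min (p ` {..<n})" and ?M = "Max (p ` {..<n})"
  define Gm where "Gm = ?M / ?m"
  have "?m \<ge> 0" by (rule pmin_nonneg[OF n2 pn])
  then have mp: "?m > 0" using False by linarith
  have w: "wterm (Rng q n) n (GammaStar p n) = (Rng q n)^2 / (real n * Gm)^3"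
    using False by (simp add: wterm_def GammaStar_def Gm_def)
  have Mge: "1 / real n \<le> ?M" by (rule pmax_ge[OF n2 ps])
  have mM: "?m \<le> ?M" using pminmax[OF n2, of 0 p] n2 by linarith
  have G1: "Gm \<ge> 1" using mM mp by (simp add: Gm_def)
  have mGm: "?m = ?M / Gm" using mp G1 by (simp add: Gm_def)
  have npos: "real n > 0" using n2 by simp
  have "1 / (real n * Gm) \<le> ?m"
  proof -
    have "1 / (real n * Gm) = (1 / real n) / Gm" by simp
    also have "\<dots> \<le> ?M / Gm" using Mge G1 by (intro divide_right_mono) auto
    finally show ?thesis using mGm by simp
  qed
  then have "(1 / (real n * Gm)) * (Rng q n)^2 / 2 \<le> ?m * (Rng q n)^2 / 2"
    by (intro divide_right_mono mult_right_mono) auto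
  moreover have hh: "real n * 1 \<le> real n * Gm" using G1 mult_left_mono[of 1 Gm "real n"] by simp
  have "real n \<ge> 2" using n2 by simp
  then have "real n * Gm \<ge> 2" using hh by linarith
  then have "(Rng q n)^2 / (real n * Gm)^3 \<le> (1 / (real n * Gm)) * (Rng q n)^2 / 2"
    by (rule cube_bound)
  ultimately show ?thesis using w v2_true_lower[OF n2 ps pn, of q] by linarith
qed

lemma length_filter_sort: "length (filter P (sort xs)) = length (filter P xs)"
  by (metis mset_filter mset_sort size_mset)

lemma kth_ge:
  fixes f :: "nat \<Rightarrow> 'a::linorder"
  assumes J: "J \<subseteq> {..<I}" "card J = k" "1 \<le> k" "k \<le> I"
    and sep: "\<forall>i\<in>J. \<forall>j\<in>{..<I} - J. f i \<le> f j" and i: "i \<in> J"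
  shows "f i \<le> kth_smallest (map f [0..<I]) k"
proof (rule ccontr)
  let ?xs = "sort (map f [0..<I])"
  assume "\<not> f i \<le> kth_smallest (map f [0..<I]) k"
  then have y: "?xs ! (k - 1) < f i" by (simp add: kth_smallest_def)
  have srt: "sorted ?xs" by simp
  have len: "length ?xs = I" by simp
  have "{..<k} \<subseteq> {t. t < length ?xs \<and> ?xs ! t < f i}"
  proof
    fix t assume "t \<in> {..<k}"
    then have t: "t \<le> k - 1" "t < I" using J by auto
    have "?xs ! t \<le> ?xs ! (k - 1)" using sorted_nth_mono[OF srt t(1)] J len by simp
    then show "t \<in> {t. t < length ?xs \<and> ?xs ! t < f i}" using y t len by auto
  qed
  moreover have "finite {t. t < length ?xs \<and> ?xs ! t < f i}" by simp
  ultimately have "card {..<k} \<le> card {t. t < length ?xs \<and> ?xs ! t < f i}"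
    by (intro card_mono)
  then have "k \<le> card {t. t < length ?xs \<and> ?xs ! t < f i}" by simp
  also have "\<dots> = length (filter (\<lambda>v. v < f i) ?xs)" by (rule length_filter_conv_card[symmetric])
  also have "\<dots> = length (filter (\<lambda>v. v < f i) (map f [0..<I]))" by (rule length_filter_sort)
  also have "\<dots> = card {t. t < I \<and> f t < f i}"
  proof -
    have "{t. t < I \<and> map f [0..<I] ! t < f i} = {t. t < I \<and> f t < f i}" by auto
    then show ?thesis by (simp add: length_filter_conv_card)
  qed
  also have "\<dots> \<le> card (J - {i})"
  proof (rule card_mono)
    show "finite (J - {i})" using J finite_subset by blast
    show "{t. t < I \<and> f t < f i} \<subseteq> J - {i}"
    proof
      fix t assume t: "t \<in> {t. t < I \<and> f t < f i}"
      have "t \<in> J"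
      proof (rule ccontr)
        assume "t \<notin> J"
        then have "f i \<le> f t" using sep i t by auto
        then show False using t by auto
      qed
      then show "t \<in> J - {i}" using t by auto
    qed
  qed
  also have "\<dots> = k - 1" using J i finite_subset by (simp add: card_Diff_singleton)
  finally show False using J by simp
qed

lemma sqrt_diff_le:
  fixes a b :: real
  assumes "0 \<le> b" "b < a"
  shows "sqrt a - sqrt b \<le> (a - b) / sqrt a"
proof -
  have sa: "sqrt a > 0" using assms by simp
  have sb: "sqrt b \<le> sqrt a" using assms by simp
  have "b = sqrt b * sqrt b" using assms by simp
  also have "\<dots> \<le> sqrt a * sqrt b" using sb assms by (intro mult_right_mono) auto
  finally have h: "b \<le> sqrt a * sqrt b" .
  have "(sqrt a - sqrt b) * sqrt a = a - sqrt a * sqrt b"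
    using assms by (simp add: algebra_simps)
  also have "\<dots> \<le> a - b" using h by simp
  finally show ?thesis using sa by (simp add: le_divide_eq)
qed

lemma ratio_bound:
  fixes X Y c W :: real and N :: nat
  assumes "N > 0" "Y > 0" "c < (X / N) / (Y / N) * W"
  shows "c * Y \<le> X * W"
proof -
  have "(X / N) / (Y / N) = X / Y" using assms by simp
  then have "c < X / Y * W" using assms by simp
  then have "c * Y < X / Y * W * Y" using assms by (intro mult_strict_right_mono) auto
  also have "X / Y * W * Y = X * W" using assms by simp
  finally show ?thesis by simp
qed

lemma step3:
  fixes mu v u s :: "nat \<Rightarrow> real" and A :: "nat set" and I :: nat
  assumes Adef: "A = {i \<in> {..<I}. v i > s i}"
    and mu_u: "\<And>i. i < I \<Longrightarrow> mu i \<le> u i"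
    and s0: "\<And>i. i < I \<Longrightarrow> s i \<ge> 0"
    and Vt: "(\<Sum>i<I. v i) \<ge> Ss" and Ss: "Ss > 0"
    and rat: "A \<noteq> {} \<Longrightarrow> c < ((\<Sum>i\<in>A. u i - mu i) / card A) / ((\<Sum>i\<in>A. v i - s i) / card A) * sqrt Ss"
    and c0: "c \<ge> 0"
  shows "(\<Sum>i<I. mu i) + c * sqrt (\<Sum>i<I. v i) \<le> (\<Sum>i<I. u i) + c * sqrt (\<Sum>i<I. s i)"
proof -
  have Asub: "A \<subseteq> {..<I}" using Adef by auto
  have finA: "finite A" using Asub finite_subset by blast
  define Smu where "Smu = (\<Sum>i\<in>A. u i - mu i)"
  define Sv where "Sv = (\<Sum>i\<in>A. v i - s i)"
  have Smu0: "Smu \<ge> 0" unfolding Smu_def using Asub mu_u by (intro sum_nonneg) auto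
  have "(\<Sum>i<I. u i - mu i) = Smu + (\<Sum>i\<in>{..<I} - A. u i - mu i)"
    unfolding Smu_def using Asub by (simp add: sum.subset_diff)
  moreover have "(\<Sum>i\<in>{..<I} - A. u i - mu i) \<ge> 0" using mu_u by (intro sum_nonneg) auto
  ultimately have U: "(\<Sum>i<I. u i) - (\<Sum>i<I. mu i) \<ge> Smu" by (simp add: sum_subtractf)
  have "(\<Sum>i<I. v i - s i) = Sv + (\<Sum>i\<in>{..<I} - A. v i - s i)"
    unfolding Sv_def using Asub by (simp add: sum.subset_diff)
  moreover have "(\<Sum>i\<in>{..<I} - A. v i - s i) \<le> 0" using Adef by (intro sum_nonpos) auto
  ultimately have V: "(\<Sum>i<I. v i) - (\<Sum>i<I. s i) \<le> Sv" by (simp add: sum_subtractf)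
  have S20: "(\<Sum>i<I. s i) \<ge> 0" using s0 by (intro sum_nonneg) auto
  have key: "c * (sqrt (\<Sum>i<I. v i) - sqrt (\<Sum>i<I. s i)) \<le> Smu"
  proof (cases "(\<Sum>i<I. v i) \<le> (\<Sum>i<I. s i)")
    case True
    then have "sqrt (\<Sum>i<I. v i) - sqrt (\<Sum>i<I. s i) \<le> 0" by simp
    then have "c * (sqrt (\<Sum>i<I. v i) - sqrt (\<Sum>i<I. s i)) \<le> 0" using c0 by (simp add: mult_nonneg_nonpos)
    then show ?thesis using Smu0 by linarith
  next
    case False
    then have Sv0: "Sv > 0" using V by linarith
    have "A \<noteq> {}"
    proof
      assume "A = {}" then have "Sv = 0" by (simp add: Sv_def)
      then show False using Sv0 by simp
    qed
    then have cA: "card A > 0" using finA by (simp add: card_gt_0_iff)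
    have cb: "c * Sv \<le> Smu * sqrt Ss"
      using ratio_bound[OF cA Sv0] rat[OF \<open>A \<noteq> {}\<close>] by (simp add: Smu_def Sv_def)
    have sq: "sqrt Ss > 0" using Ss by simp
    have "sqrt (\<Sum>i<I. v i) - sqrt (\<Sum>i<I. s i) \<le> ((\<Sum>i<I. v i) - (\<Sum>i<I. s i)) / sqrt (\<Sum>i<I. v i)"
      using False S20 by (intro sqrt_diff_le) auto
    also have "\<dots> \<le> Sv / sqrt (\<Sum>i<I. v i)" using V Vt Ss by (intro divide_right_mono) auto
    also have "\<dots> \<le> Sv / sqrt Ss" using Sv0 sq Vt by (intro divide_left_mono mult_pos_pos) auto
    finally have "c * (sqrt (\<Sum>i<I. v i) - sqrt (\<Sum>i<I. s i)) \<le> c * (Sv / sqrt Ss)"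
      using c0 by (intro mult_left_mono) auto
    also have "c * (Sv / sqrt Ss) = (c * Sv) / sqrt Ss" by simp
    also have "\<dots> \<le> Smu * sqrt Ss / sqrt Ss" using cb sq by (intro divide_right_mono) auto
    also have "\<dots> = Smu" using sq by simp
    finally show ?thesis .
  qed
  show ?thesis using key U by (simp add: right_diff_distrib)
qed

lemma card_split: "finite A \<Longrightarrow> card A = card (A \<inter> B) + card (A - B)"
  by (metis Diff_Diff_Int Diff_subset card_Diff_subset_Int card_mono add_diff_inverse_nat
      finite_Int le_antisym not_le Int_Diff card_Un_disjoint Int_Diff_disjoint finite_Diff)

lemma pair_sum:
  fixes f g :: "nat \<Rightarrow> real"
  assumes "finite P" "finite Q"
  shows "(\<Sum>(i, j)\<in>P \<times> Q. f j - g i) = real (card P) * (\<Sum>j\<in>Q. f j) - real (card Q) * (\<Sum>i\<in>P. g i)"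
proof -
  have "(\<Sum>(i, j)\<in>P \<times> Q. f j - g i) = (\<Sum>i\<in>P. \<Sum>j\<in>Q. f j - g i)"
    by (rule sum.cartesian_product[symmetric])
  also have "\<dots> = (\<Sum>i\<in>P. (\<Sum>j\<in>Q. f j) - real (card Q) * g i)"
    by (simp add: sum_subtractf)
  also have "\<dots> = real (card P) * (\<Sum>j\<in>Q. f j) - real (card Q) * (\<Sum>i\<in>P. g i)"
    by (simp add: sum_subtractf sum_distrib_left)
  finally show ?thesis .
qed

lemma step4:
  fixes d vv :: "nat \<Rightarrow> real" and Istar Irank :: "nat set" and c W :: real
    and B :: "(nat \<times> nat) set"
  assumes fin: "finite Istar" "finite Irank" and cards: "card Istar = card Irank"
    and rank: "\<And>i j. i \<in> Irank - Istar \<Longrightarrow> j \<in> Istar - Irank \<Longrightarrow> d i < d j \<or> (d i = d j \<and> vv j \<le> vv i)"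
    and Bdef: "B = {(i, j). i \<in> Irank - Istar \<and> j \<in> Istar - Irank \<and> vv i < vv j}"
    and rat: "B \<noteq> {} \<Longrightarrow> c < ((\<Sum>(i, j)\<in>B. d j - d i) / card B) / ((\<Sum>(i, j)\<in>B. vv j - vv i) / card B) * sqrt W"
    and W: "W \<le> (\<Sum>i\<in>Istar. vv i)"
    and vv0: "\<And>i. i \<in> Irank \<Longrightarrow> vv i \<ge> 0"
    and c0: "c \<ge> 0"
  shows "c * sqrt (\<Sum>i\<in>Istar. vv i) - (\<Sum>i\<in>Istar. d i) \<le> c * sqrt (\<Sum>i\<in>Irank. vv i) - (\<Sum>i\<in>Irank. d i)"
proof -
  define P where "P = Irank - Istar"
  define Q where "Q = Istar - Irank"
  define C where "C = Istar \<inter> Irank"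
  have finP: "finite P" "finite Q" using fin by (auto simp: P_def Q_def)
  have s1: "(\<Sum>i\<in>Istar. f i) = (\<Sum>i\<in>C. f i) + (\<Sum>i\<in>Q. f i)" for f :: "nat \<Rightarrow> real"
    unfolding C_def Q_def using fin(1) by (rule sum.Int_Diff)
  have s2: "(\<Sum>i\<in>Irank. f i) = (\<Sum>i\<in>C. f i) + (\<Sum>i\<in>P. f i)" for f :: "nat \<Rightarrow> real"
  proof -
    have "(\<Sum>i\<in>Irank. f i) = (\<Sum>i\<in>Irank \<inter> Istar. f i) + (\<Sum>i\<in>Irank - Istar. f i)"
      using fin(2) by (rule sum.Int_Diff)
    then show ?thesis by (simp add: C_def P_def Int_commute)
  qed
  have cPQ: "card P = card Q"
  proof -
    have "card Istar = card C + card Q" unfolding C_def Q_def using fin(1) by (rule card_split)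
    moreover have "card Irank = card (Irank \<inter> Istar) + card P" unfolding P_def using fin(2) by (rule card_split)
    ultimately show ?thesis using cards by (simp add: C_def Int_commute)
  qed
  define m where "m = card P"
  define Dd where "Dd = (\<Sum>i\<in>Q. d i) - (\<Sum>i\<in>P. d i)"
  define Dv where "Dv = (\<Sum>i\<in>Q. vv i) - (\<Sum>i\<in>P. vv i)"
  have Td: "(\<Sum>(i, j)\<in>P \<times> Q. d j - d i) = real m * Dd"
    using pair_sum[OF finP, of d d] cPQ by (simp add: m_def Dd_def right_diff_distrib)
  have Tv: "(\<Sum>(i, j)\<in>P \<times> Q. vv j - vv i) = real m * Dv"
    using pair_sum[OF finP, of vv vv] cPQ by (simp add: m_def Dv_def right_diff_distrib)
  have Tdnn: "(\<Sum>(i, j)\<in>P \<times> Q. d j - d i) \<ge> 0"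
    by (intro sum_nonneg) (use rank in \<open>force simp: P_def Q_def\<close>)
  have m0: "m = 0 \<Longrightarrow> P = {} \<and> Q = {}" using finP cPQ by (simp add: m_def)
  have Dd0: "Dd \<ge> 0"
  proof (cases "m = 0")
    case True then show ?thesis using m0 by (simp add: Dd_def)
  next
    case False then show ?thesis using Td Tdnn by (simp add: zero_le_mult_iff)
  qed
  have goal_eq: "?thesis \<longleftrightarrow> c * (sqrt (\<Sum>i\<in>Istar. vv i) - sqrt (\<Sum>i\<in>Irank. vv i)) \<le> Dd"
    by (simp add: s1[of d] s2[of d] Dd_def right_diff_distrib) linarith
  have dv_eq: "(\<Sum>i\<in>Istar. vv i) - (\<Sum>i\<in>Irank. vv i) = Dv"
    by (simp add: s1[of vv] s2[of vv] Dv_def)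
  have s2nn: "(\<Sum>i\<in>Irank. vv i) \<ge> 0" using vv0 by (intro sum_nonneg) auto
  show ?thesis
  proof (cases "(\<Sum>i\<in>Istar. vv i) \<le> (\<Sum>i\<in>Irank. vv i) \<or> c = 0")
    case True
    then have "c * (sqrt (\<Sum>i\<in>Istar. vv i) - sqrt (\<Sum>i\<in>Irank. vv i)) \<le> 0"
      using c0 by (auto simp: mult_nonneg_nonpos)
    then show ?thesis using goal_eq Dd0 by linarith
  next
    case False
    then have big: "(\<Sum>i\<in>Istar. vv i) > (\<Sum>i\<in>Irank. vv i)" and cpos: "c > 0" using c0 by auto
    then have Dv0: "Dv > 0" using dv_eq by linarith
    have mpos: "m > 0"
    proof (rule ccontr)
      assume "\<not> m > 0" then have "P = {} \<and> Q = {}" using m0 by simp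
      then show False using Dv0 by (simp add: Dv_def)
    qed
    have Bsub: "B \<subseteq> P \<times> Q" unfolding Bdef P_def Q_def by auto
    have finB: "finite B" using Bsub finP finite_subset by blast
    have "(\<Sum>(i, j)\<in>P \<times> Q. vv j - vv i) = (\<Sum>(i, j)\<in>B. vv j - vv i) + (\<Sum>(i, j)\<in>P \<times> Q - B. vv j - vv i)"
      using Bsub finP by (simp add: sum.subset_diff)
    moreover have "(\<Sum>(i, j)\<in>P \<times> Q - B. vv j - vv i) \<le> 0"
      by (intro sum_nonpos) (auto simp: Bdef P_def Q_def)
    ultimately have SBv: "(\<Sum>(i, j)\<in>B. vv j - vv i) \<ge> real m * Dv" using Tv by linarith
    have "(\<Sum>(i, j)\<in>P \<times> Q. d j - d i) = (\<Sum>(i, j)\<in>B. d j - d i) + (\<Sum>(i, j)\<in>P \<times> Q - B. d j - d i)"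
      using Bsub finP by (simp add: sum.subset_diff)
    moreover have "(\<Sum>(i, j)\<in>P \<times> Q - B. d j - d i) \<ge> 0"
      by (intro sum_nonneg) (use rank in \<open>force simp: P_def Q_def\<close>)
    ultimately have SBd: "(\<Sum>(i, j)\<in>B. d j - d i) \<le> real m * Dd" using Td by linarith
    have mDv: "real m * Dv > 0" using mpos Dv0 by simp
    then have SBv0: "(\<Sum>(i, j)\<in>B. vv j - vv i) > 0" using SBv by linarith
    have Bne: "B \<noteq> {}" using SBv0 by auto
    have cB: "card B > 0" using Bne finB by (simp add: card_gt_0_iff)
    have cb: "c * (\<Sum>(i, j)\<in>B. vv j - vv i) \<le> (\<Sum>(i, j)\<in>B. d j - d i) * sqrt W"
      by (rule ratio_bound[OF cB SBv0 rat[OF Bne]])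
    have "c * (\<Sum>(i, j)\<in>B. vv j - vv i) > 0" using cpos SBv0 by simp
    then have pos: "(\<Sum>(i, j)\<in>B. d j - d i) * sqrt W > 0" using cb by linarith
    have SBdnn: "(\<Sum>(i, j)\<in>B. d j - d i) \<ge> 0"
      by (intro sum_nonneg) (use rank in \<open>force simp: Bdef\<close>)
    have sW: "sqrt W > 0"
    proof (rule ccontr)
      assume "\<not> sqrt W > 0"
      then have "(\<Sum>(i, j)\<in>B. d j - d i) * sqrt W \<le> 0" using SBdnn by (simp add: mult_nonneg_nonpos)
      then show False using pos by linarith
    qed
    have W0: "W > 0" using sW by simp
    have "sqrt (\<Sum>i\<in>Istar. vv i) - sqrt (\<Sum>i\<in>Irank. vv i) \<le> Dv / sqrt (\<Sum>i\<in>Istar. vv i)"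
      using sqrt_diff_le[OF s2nn big] dv_eq by simp
    also have "\<dots> \<le> Dv / sqrt W"
      using W W0 Dv0 by (intro divide_left_mono mult_pos_pos) auto
    finally have h1: "c * (sqrt (\<Sum>i\<in>Istar. vv i) - sqrt (\<Sum>i\<in>Irank. vv i)) \<le> c * (Dv / sqrt W)"
      using cpos by (intro mult_left_mono) auto
    have "c * (Dv / sqrt W) = c * (real m * Dv) / (real m * sqrt W)" using mpos by simp
    also have "\<dots> \<le> c * (\<Sum>(i, j)\<in>B. vv j - vv i) / (real m * sqrt W)"
      using SBv cpos mpos sW by (intro divide_right_mono mult_left_mono) auto
    also have "\<dots> \<le> (\<Sum>(i, j)\<in>B. d j - d i) * sqrt W / (real m * sqrt W)"
      using cb mpos sW by (intro divide_right_mono) auto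
    also have "\<dots> = (\<Sum>(i, j)\<in>B. d j - d i) / real m" using sW by simp
    also have "\<dots> \<le> real m * Dd / real m" using SBd mpos by (intro divide_right_mono) auto
    also have "\<dots> = Dd" using mpos by simp
    finally show ?thesis using h1 goal_eq by linarith
  qed
qed

lemma muG_fin [simp]: "muG q n (ereal G) = mu_fin q n G" by (simp add: muG_def)
lemma muG_inf [simp]: "muG q n \<infinity> = qsrt q n ! (n - 1)" by (simp add: muG_def)
lemma v2G_fin [simp]: "v2G q n (ereal G) = v2_fin q n G" by (simp add: v2G_def)
lemma v2G_inf [simp]: "v2G q n \<infinity> = 0" by (simp add: v2G_def)

lemma mu_true_le_max:
  fixes p q :: "nat \<Rightarrow> real"
  assumes pn: "\<And>j. j < n \<Longrightarrow> p j \<ge> 0" and ps: "(\<Sum>j<n. p j) = 1"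
  shows "mu_true p q n \<le> qsrt q n ! (n - 1)"
proof -
  have "mu_true p q n \<le> (\<Sum>j<n. p j * qsrt q n ! (n - 1))" unfolding mu_true_def
    using pn qsrt_bounds(2) by (intro sum_mono mult_left_mono) auto
  also have "\<dots> = qsrt q n ! (n - 1)" using ps by (simp add: sum_distrib_right[symmetric])
  finally show ?thesis .
qed

lemma det:
  fixes I :: nat and n :: "nat \<Rightarrow> nat" and q p :: "nat \<Rightarrow> nat \<Rightarrow> real"
    and k :: nat and G0 c :: real and Istar Irank :: "nat set"
  assumes n2: "\<And>i. i < I \<Longrightarrow> n i \<ge> 2"
    and pn: "\<And>i j. i < I \<Longrightarrow> j < n i \<Longrightarrow> p i j \<ge> 0"
    and ps: "\<And>i. i < I \<Longrightarrow> (\<Sum>j<n i. p i j) = 1"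
    and kr: "1 \<le> k" "k \<le> I" and G1: "G0 \<ge> 1"
    and Gk: "kth_smallest (map (\<lambda>i. GammaStar (p i) (n i)) [0..<I]) k \<le> ereal G0"
    and IS: "is_Istar I n p k Istar" and IR: "is_Irank I n q G0 k Irank"
    and Sp: "Ssum I n q p > 0"
    and A3: "A3_quantity I n q p G0 Istar > ereal c"
    and A4: "A4_quantity n q G0 Irank Istar > ereal c"
    and c0: "c \<ge> 0"
  shows "(\<Sum>i<I. mu_true (p i) (q i) (n i)) + c * sqrt (\<Sum>i<I. v2_true (p i) (q i) (n i))
         \<le> mu_Gk I n q G0 Irank + c * sqrt (sigma2_Gk n q G0 Irank)"
proof -
  define Gm where "Gm = (\<lambda>i. if i \<in> Istar then ereal G0 else \<infinity>)"
  define u where "u i = muG (q i) (n i) (Gm i)" for i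
  define s where "s i = v2G (q i) (n i) (Gm i)" for i
  define mu where "mu i = mu_true (p i) (q i) (n i)" for i
  define v where "v i = v2_true (p i) (q i) (n i)" for i
  define qm where "qm i = qsrt (q i) (n i) ! (n i - 1)" for i
  define d where "d i = muG (q i) (n i) \<infinity> - muG (q i) (n i) (ereal G0)" for i
  define vv where "vv i = v2G (q i) (n i) (ereal G0)" for i
  have Istar_sub: "Istar \<subseteq> {..<I}" and cIs: "card Istar = k"
    and sepS: "\<forall>i\<in>Istar. \<forall>j\<in>{..<I} - Istar. GammaStar (p i) (n i) \<le> GammaStar (p j) (n j)"
    using IS unfolding is_Istar_def by auto
  have Irank_sub: "Irank \<subseteq> {..<I}" and cIr: "card Irank = k"
    using IR unfolding is_Irank_def by auto
  have finS: "finite Istar" using Istar_sub finite_subset by blast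
  have finR: "finite Irank" using Irank_sub finite_subset by blast
  have gs: "GammaStar (p i) (n i) \<le> ereal G0" if "i \<in> Istar" for i
  proof -
    have "GammaStar (p i) (n i) \<le> kth_smallest (map (\<lambda>i. GammaStar (p i) (n i)) [0..<I]) k"
      using kth_ge[OF Istar_sub cIs kr sepS that] .
    then show ?thesis using Gk by (rule order_trans)
  qed
  have st3: "(\<Sum>i<I. mu i) + c * sqrt (\<Sum>i<I. v i) \<le> (\<Sum>i<I. u i) + c * sqrt (\<Sum>i<I. s i)"
  proof (rule step3[where A = "A_set I n q p Gm" and Ss = "Ssum I n q p"])
    show "A_set I n q p Gm = {i \<in> {..<I}. s i < v i}"
      by (simp add: A_set_def s_def v_def)
    show "mu i \<le> u i" if i: "i < I" for i
    proof (cases "i \<in> Istar")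
      case True
      have "mu i \<le> mu_fin (q i) (n i) G0" unfolding mu_def
        using mu_true_le(1)[OF n2[OF i] pn[OF i] ps[OF i] gs[OF True]] .
      then show ?thesis using True by (simp add: u_def Gm_def)
    next
      case False
      then show ?thesis unfolding mu_def u_def Gm_def
        using mu_true_le_max[OF pn[OF i] ps[OF i]] by simp
    qed
    show "s i \<ge> 0" if i: "i < I" for i
      using v2_fin_nonneg[OF G1 n2[OF i]] by (simp add: s_def Gm_def)
    show "(\<Sum>i<I. v i) \<ge> Ssum I n q p" unfolding Ssum_def v_def
      using wterm_le_v2_true[OF n2 ps pn] by (intro sum_mono) auto
    show "Ssum I n q p > 0" by (rule Sp)
    show "c \<ge> 0" by (rule c0)
    assume ne: "A_set I n q p Gm \<noteq> {}"
    have "A3_quantity I n q p G0 Istar = ereal (Delta_mu I n q p Gm / Delta_v2 I n q p Gm * sqrt (Ssum I n q p))"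
      using ne by (simp add: A3_quantity_def Gm_def Let_def)
    then have "c < Delta_mu I n q p Gm / Delta_v2 I n q p Gm * sqrt (Ssum I n q p)" using A3 by simp
    then show "c < ((\<Sum>i\<in>A_set I n q p Gm. u i - mu i) / card (A_set I n q p Gm)) /
        ((\<Sum>i\<in>A_set I n q p Gm. v i - s i) / card (A_set I n q p Gm)) * sqrt (Ssum I n q p)"
      by (simp add: Delta_mu_def Delta_v2_def Let_def u_def mu_def v_def s_def)
  qed
  have st4: "c * sqrt (\<Sum>i\<in>Istar. vv i) - (\<Sum>i\<in>Istar. d i) \<le> c * sqrt (\<Sum>i\<in>Irank. vv i) - (\<Sum>i\<in>Irank. d i)"
  proof (rule step4[where B = "B_set n q G0 Irank Istar" and W = "\<Sum>i\<in>Istar. (Rng (q i) (n i))^2 / (real (n i) * G0)^3"])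
    show "finite Istar" "finite Irank" by (rule finS, rule finR)
    show "card Istar = card Irank" using cIs cIr by simp
    show "d i < d j \<or> d i = d j \<and> vv j \<le> vv i" if "i \<in> Irank - Istar" "j \<in> Istar - Irank" for i j
    proof -
      have "j \<in> {..<I} - Irank" using that Istar_sub by auto
      then show ?thesis using IR that unfolding is_Irank_def d_def vv_def Let_def by auto
    qed
    show "B_set n q G0 Irank Istar = {(i, j). i \<in> Irank - Istar \<and> j \<in> Istar - Irank \<and> vv i < vv j}"
      by (simp add: B_set_def vv_def)
    show "(\<Sum>i\<in>Istar. (Rng (q i) (n i))^2 / (real (n i) * G0)^3) \<le> (\<Sum>i\<in>Istar. vv i)"
      unfolding vv_def using Istar_sub v2_fin_wterm[OF G1 n2] by (intro sum_mono) auto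
    show "vv i \<ge> 0" if "i \<in> Irank" for i
      using that Irank_sub v2_fin_nonneg[OF G1 n2] by (auto simp: vv_def)
    show "c \<ge> 0" by (rule c0)
    assume ne: "B_set n q G0 Irank Istar \<noteq> {}"
    then show "c < ((\<Sum>(i, j)\<in>B_set n q G0 Irank Istar. d j - d i) / card (B_set n q G0 Irank Istar)) /
        ((\<Sum>(i, j)\<in>B_set n q G0 Irank Istar. vv j - vv i) / card (B_set n q G0 Irank Istar)) *
        sqrt (\<Sum>i\<in>Istar. (Rng (q i) (n i))^2 / (real (n i) * G0)^3)"
      using A4 by (simp add: A4_quantity_def Let_def d_def vv_def)
  qed
  have u_eq: "u i = qm i - (if i \<in> Istar then d i else 0)" for i
    by (simp add: u_def qm_def d_def Gm_def)
  have U: "(\<Sum>i<I. u i) = (\<Sum>i<I. qm i) - (\<Sum>i\<in>Istar. d i)"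
  proof -
    have "(\<Sum>i<I. u i) = (\<Sum>i<I. qm i) - (\<Sum>i<I. (if i \<in> Istar then d i else 0))"
      by (simp add: u_eq sum_subtractf)
    also have "(\<Sum>i<I. (if i \<in> Istar then d i else 0)) = (\<Sum>i\<in>{..<I} \<inter> Istar. d i)"
      by (rule sum.inter_restrict[symmetric]) simp
    also have "{..<I} \<inter> Istar = Istar" using Istar_sub by auto
    finally show ?thesis .
  qed
  have S2: "(\<Sum>i<I. s i) = (\<Sum>i\<in>Istar. vv i)"
  proof -
    have "(\<Sum>i<I. s i) = (\<Sum>i<I. (if i \<in> Istar then vv i else 0))"
      by (rule sum.cong) (auto simp: s_def vv_def Gm_def)
    also have "\<dots> = (\<Sum>i\<in>{..<I} \<inter> Istar. vv i)" by (rule sum.inter_restrict[symmetric]) simp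
    also have "{..<I} \<inter> Istar = Istar" using Istar_sub by auto
    finally show ?thesis .
  qed
  have MG: "mu_Gk I n q G0 Irank = (\<Sum>i<I. qm i) - (\<Sum>i\<in>Irank. d i)"
  proof -
    have "(\<Sum>i<I. qm i) = (\<Sum>i\<in>Irank. qm i) + (\<Sum>i\<in>{..<I} - Irank. qm i)"
      using Irank_sub by (simp add: sum.subset_diff)
    moreover have "(\<Sum>i\<in>Irank. muG (q i) (n i) (ereal G0)) = (\<Sum>i\<in>Irank. qm i) - (\<Sum>i\<in>Irank. d i)"
      by (simp add: qm_def d_def sum_subtractf[symmetric])
    ultimately show ?thesis by (simp add: mu_Gk_def qm_def)
  qed
  have SG: "sigma2_Gk n q G0 Irank = (\<Sum>i\<in>Irank. vv i)" by (simp add: sigma2_Gk_def vv_def)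
  show ?thesis using st3 st4 U S2 MG SG by (simp add: mu_def v_def)
qed

definition Omg :: "nat \<Rightarrow> (nat \<Rightarrow> nat) \<Rightarrow> (nat \<Rightarrow> nat) set" where
  "Omg I n = PiE {..<I} (\<lambda>i. {..<n i})"

definition wt :: "nat \<Rightarrow> (nat \<Rightarrow> nat \<Rightarrow> real) \<Rightarrow> (nat \<Rightarrow> nat) \<Rightarrow> real" where
  "wt I p z = (\<Prod>i<I. p i (z i))"

definition validp :: "nat \<Rightarrow> (nat \<Rightarrow> nat) \<Rightarrow> (nat \<Rightarrow> nat \<Rightarrow> real) \<Rightarrow> bool" where
  "validp I n p \<longleftrightarrow> (\<forall>i<I. \<forall>j<n i. p i j \<ge> 0) \<and> (\<forall>i<I. (\<Sum>j<n i. p i j) = 1)"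

definition Qp :: "nat \<Rightarrow> (nat \<Rightarrow> nat) \<Rightarrow> (nat \<Rightarrow> nat \<Rightarrow> real) \<Rightarrow> (nat \<Rightarrow> nat) pmf" where
  "Qp I n p = embed_pmf (\<lambda>z. if z \<in> Omg I n then wt I p z else 0)"

lemma finite_Omg [simp]: "finite (Omg I n)"
  unfolding Omg_def by (intro finite_PiE) auto

lemma prod_sum_Omg:
  fixes f :: "nat \<Rightarrow> nat \<Rightarrow> 'c::comm_semiring_1"
  shows "(\<Sum>z\<in>Omg I n. \<Prod>i<I. f i (z i)) = (\<Prod>i<I. \<Sum>j<n i. f i j)"
  unfolding Omg_def by (rule prod_sum_PiE[symmetric]) auto

lemma wt_nonneg: "validp I n p \<Longrightarrow> z \<in> Omg I n \<Longrightarrow> wt I p z \<ge> 0"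
  unfolding validp_def wt_def Omg_def by (intro prod_nonneg) (auto simp: PiE_def Pi_def)

lemma wt_sum: "validp I n p \<Longrightarrow> (\<Sum>z\<in>Omg I n. wt I p z) = 1"
  unfolding wt_def prod_sum_Omg validp_def by simp

lemma Qp_pmf:
  assumes v: "validp I n p"
  shows "pmf (Qp I n p) z = (if z \<in> Omg I n then wt I p z else 0)"
  unfolding Qp_def
proof (rule pmf_embed_pmf)
  show "\<And>x. 0 \<le> (if x \<in> Omg I n then wt I p x else 0)" using wt_nonneg[OF v] by auto
  have "(\<integral>\<^sup>+x. ennreal (if x \<in> Omg I n then wt I p x else 0) \<partial>count_space UNIV)
      = (\<integral>\<^sup>+x. ennreal (wt I p x) * indicator (Omg I n) x \<partial>count_space UNIV)"
    by (intro nn_integral_cong) (auto split: split_indicator)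
  also have "\<dots> = (\<integral>\<^sup>+x. ennreal (wt I p x) \<partial>count_space (Omg I n))"
    by (simp add: nn_integral_count_space_indicator)
  also have "\<dots> = (\<Sum>z\<in>Omg I n. ennreal (wt I p z))"
    by (simp add: nn_integral_count_space_finite)
  also have "\<dots> = ennreal (\<Sum>z\<in>Omg I n. wt I p z)" using wt_nonneg[OF v] by (intro sum_ennreal) auto
  also have "\<dots> = 1" using wt_sum[OF v] by simp
  finally show "(\<integral>\<^sup>+x. ennreal (if x \<in> Omg I n then wt I p x else 0) \<partial>count_space UNIV) = 1" .
qed

lemma Qp_set:
  assumes v: "validp I n p"
  shows "set_pmf (Qp I n p) \<subseteq> Omg I n"
  using Qp_pmf[OF v] by (auto simp: set_pmf_eq)

lemma Qp_integral:
  fixes f :: "(nat \<Rightarrow> nat) \<Rightarrow> 'b::{banach, second_countable_topology}"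
  assumes v: "validp I n p"
  shows "(\<integral>z. f z \<partial>measure_pmf (Qp I n p)) = (\<Sum>z\<in>Omg I n. wt I p z *\<^sub>R f z)"
proof -
  have "(\<integral>z. f z \<partial>measure_pmf (Qp I n p)) = (\<Sum>z\<in>Omg I n. pmf (Qp I n p) z *\<^sub>R f z)"
    using Qp_set[OF v] by (intro integral_measure_pmf) auto
  also have "\<dots> = (\<Sum>z\<in>Omg I n. wt I p z *\<^sub>R f z)"
    using Qp_pmf[OF v] by (intro sum.cong) auto
  finally show ?thesis .
qed

lemma Qp_measure:
  assumes v: "validp I n p"
  shows "measure (measure_pmf (Qp I n p)) A = (\<Sum>z\<in>Omg I n. wt I p z * indicator A z)"
proof -
  have "measure (measure_pmf (Qp I n p)) A = (\<integral>z. indicator A z \<partial>measure_pmf (Qp I n p))"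
    by simp
  also have "\<dots> = (\<Sum>z\<in>Omg I n. wt I p z *\<^sub>R (indicator A z :: real))" by (rule Qp_integral[OF v])
  finally show ?thesis by simp
qed

lemma prob_T_ge_eq:
  assumes v: "validp I n p"
  shows "prob_T_ge I n q p t = measure (measure_pmf (Qp I n p)) {z. t \<le> (\<Sum>i<I. q i (z i))}"
  unfolding Qp_measure[OF v] prob_T_ge_def Omg_def[symmetric] wt_def
  by (intro sum.cong) (auto split: split_indicator)

definition ETf :: "nat \<Rightarrow> (nat \<Rightarrow> nat) \<Rightarrow> (nat \<Rightarrow> nat \<Rightarrow> real) \<Rightarrow> (nat \<Rightarrow> nat \<Rightarrow> real) \<Rightarrow> real" where
  "ETf I n q p = (\<Sum>i<I. mu_true (p i) (q i) (n i))"
definition Vf :: "nat \<Rightarrow> (nat \<Rightarrow> nat) \<Rightarrow> (nat \<Rightarrow> nat \<Rightarrow> real) \<Rightarrow> (nat \<Rightarrow> nat \<Rightarrow> real) \<Rightarrow> real" where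
  "Vf I n q p = (\<Sum>i<I. v2_true (p i) (q i) (n i))"
definition Sfun :: "nat \<Rightarrow> (nat \<Rightarrow> nat) \<Rightarrow> (nat \<Rightarrow> nat \<Rightarrow> real) \<Rightarrow> (nat \<Rightarrow> nat \<Rightarrow> real) \<Rightarrow> (nat \<Rightarrow> nat) \<Rightarrow> real" where
  "Sfun I n q p z = ((\<Sum>i<I. q i (z i)) - ETf I n q p) / sqrt (Vf I n q p)"
definition Mdist :: "nat \<Rightarrow> (nat \<Rightarrow> nat) \<Rightarrow> (nat \<Rightarrow> nat \<Rightarrow> real) \<Rightarrow> (nat \<Rightarrow> nat \<Rightarrow> real) \<Rightarrow> real measure" where
  "Mdist I n q p = distr (measure_pmf (Qp I n p)) borel (Sfun I n q p)"
definition phi :: "nat \<Rightarrow> (nat \<Rightarrow> real) \<Rightarrow> (nat \<Rightarrow> real) \<Rightarrow> real \<Rightarrow> complex" where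
  "phi n p x s = (\<Sum>j<n. complex_of_real (p j) * iexp (s * x j))"

lemma Mdist_real_distribution: "real_distribution (Mdist I n q p)"
  unfolding Mdist_def by (rule prob_space.real_distribution_distr[OF prob_space_measure_pmf]) simp

lemma char_Mdist:
  assumes v: "validp I n p"
  shows "char (Mdist I n q p) t =
    (\<Prod>i<I. phi (n i) (p i) (\<lambda>j. q i j - mu_true (p i) (q i) (n i)) (t / sqrt (Vf I n q p)))"
proof -
  define sd where "sd = sqrt (Vf I n q p)"
  define x where "x i j = q i j - mu_true (p i) (q i) (n i)" for i j
  have S: "t * Sfun I n q p z = (\<Sum>i<I. (t / sd) * x i (z i))" for z
    unfolding Sfun_def ETf_def x_def sd_def
    by (simp add: sum_subtractf sum_distrib_left sum_divide_distrib[symmetric] field_simps)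
  have "char (Mdist I n q p) t = (\<integral>z. iexp (t * Sfun I n q p z) \<partial>measure_pmf (Qp I n p))"
    unfolding char_def Mdist_def by (subst integral_distr) auto
  also have "\<dots> = (\<Sum>z\<in>Omg I n. wt I p z *\<^sub>R iexp (t * Sfun I n q p z))"
    by (rule Qp_integral[OF v])
  also have "\<dots> = (\<Sum>z\<in>Omg I n. \<Prod>i<I. complex_of_real (p i (z i)) * iexp ((t / sd) * x i (z i)))"
  proof (rule sum.cong[OF refl])
    fix z
    have "iexp (t * Sfun I n q p z) = exp (\<Sum>i<I. \<i> * complex_of_real ((t / sd) * x i (z i)))"
      unfolding S by (simp add: sum_distrib_left)
    also have "\<dots> = (\<Prod>i<I. iexp ((t / sd) * x i (z i)))" by (simp add: exp_sum)
    finally have "wt I p z *\<^sub>R iexp (t * Sfun I n q p z) =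
        complex_of_real (\<Prod>i<I. p i (z i)) * (\<Prod>i<I. iexp ((t / sd) * x i (z i)))"
      by (simp add: wt_def scaleR_conv_of_real)
    also have "\<dots> = (\<Prod>i<I. complex_of_real (p i (z i)) * iexp ((t / sd) * x i (z i)))"
      by (simp add: prod.distrib)
    finally show "wt I p z *\<^sub>R iexp (t * Sfun I n q p z) =
        (\<Prod>i<I. complex_of_real (p i (z i)) * iexp ((t / sd) * x i (z i)))" .
  qed
  also have "\<dots> = (\<Prod>i<I. \<Sum>j<n i. complex_of_real (p i j) * iexp ((t / sd) * x i j))"
    by (rule prod_sum_Omg)
  also have "\<dots> = (\<Prod>i<I. phi (n i) (p i) (x i) (t / sd))"
    by (simp add: phi_def mult.commute)
  finally show ?thesis by (simp add: x_def[abs_def] sd_def)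
qed

lemma exp_quad:
  fixes a :: real
  assumes a0: "0 \<le> a"
  shows "\<bar>1 - a - exp (- a)\<bar> \<le> a^2 / 2"
proof -
  define g where "g y = exp (- y) - 1 + y - y^2 / 2" for y :: real
  have d: "(g has_real_derivative (- exp (- y) + 1 - y)) (at y)" for y
    unfolding g_def by (auto intro!: derivative_eq_intros simp: power2_eq_square)
  have h: "- exp (- x) + 1 - x \<le> 0" for x :: real
    using exp_ge_add_one_self[of "- x"] by simp
  have "g a \<le> g 0"
    by (rule deriv_nonpos_imp_antimono[where g' = "\<lambda>y. - exp (- y) + 1 - y"]) (use d h a0 in auto)
  then have up: "exp (- a) \<le> 1 - a + a^2 / 2" by (simp add: g_def)
  have lo: "1 - a \<le> exp (- a)" using exp_ge_add_one_self[of "- a"] by simp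
  show ?thesis using up lo by (simp add: abs_if)
qed

lemma iexp_taylor2:
  fixes y :: real
  shows "cmod (iexp y - (1 + \<i> * complex_of_real y - complex_of_real (y^2 / 2))) \<le> \<bar>y\<bar>^3 / 6"
proof -
  have e: "(\<Sum>k\<le>2. (\<i> * complex_of_real y)^k / fact k) = 1 + \<i> * complex_of_real y - complex_of_real (y^2 / 2)"
    by (simp add: eval_nat_numeral power2_eq_square complex_eq_iff)
  have f: "fact (Suc 2) = (6::real)" by (simp add: eval_nat_numeral)
  show ?thesis using iexp_approx1[of y 2] unfolding e f by simp
qed

lemma phi_norm:
  fixes p x :: "nat \<Rightarrow> real"
  assumes pn: "\<And>j. j < n \<Longrightarrow> p j \<ge> 0" and ps: "(\<Sum>j<n. p j) = 1"
  shows "norm (phi n p x s) \<le> 1"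
proof -
  have "norm (phi n p x s) \<le> (\<Sum>j<n. norm (complex_of_real (p j) * iexp (s * x j)))"
    unfolding phi_def by (rule norm_sum)
  also have "\<dots> = (\<Sum>j<n. p j)" using pn by (intro sum.cong) (auto simp: norm_mult)
  finally show ?thesis using ps by simp
qed

lemma phi_approx:
  fixes p x :: "nat \<Rightarrow> real"
  assumes pn: "\<And>j. j < n \<Longrightarrow> p j \<ge> 0" and ps: "(\<Sum>j<n. p j) = 1"
    and m0: "(\<Sum>j<n. p j * x j) = 0" and xR: "\<And>j. j < n \<Longrightarrow> \<bar>x j\<bar> \<le> R"
  shows "norm (phi n p x s - complex_of_real (1 - s^2 * (\<Sum>j<n. p j * (x j)^2) / 2))
           \<le> \<bar>s\<bar>^3 * R * (\<Sum>j<n. p j * (x j)^2) / 6"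
proof -
  define P where "P y = 1 + \<i> * complex_of_real y - complex_of_real (y^2 / 2)" for y
  have P_eq: "complex_of_real (p j) * P (s * x j) =
      complex_of_real (p j - s^2 * (p j * (x j)^2) / 2) + \<i> * complex_of_real (s * (p j * x j))" for j
    by (simp add: P_def complex_eq_iff power2_eq_square algebra_simps)
  have "(\<Sum>j<n. complex_of_real (p j) * P (s * x j)) =
      complex_of_real (\<Sum>j<n. p j - s^2 * (p j * (x j)^2) / 2) + \<i> * complex_of_real (s * (\<Sum>j<n. p j * x j))"
    unfolding P_eq by (simp add: sum.distrib sum_distrib_left[symmetric])
  also have "(\<Sum>j<n. p j - s^2 * (p j * (x j)^2) / 2) = 1 - s^2 * (\<Sum>j<n. p j * (x j)^2) / 2"
    using ps by (simp add: sum_subtractf sum_distrib_left sum_divide_distrib)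
  finally have sP: "(\<Sum>j<n. complex_of_real (p j) * P (s * x j)) = complex_of_real (1 - s^2 * (\<Sum>j<n. p j * (x j)^2) / 2)"
    using m0 by simp
  have "phi n p x s - complex_of_real (1 - s^2 * (\<Sum>j<n. p j * (x j)^2) / 2)
      = (\<Sum>j<n. complex_of_real (p j) * (iexp (s * x j) - P (s * x j)))"
    unfolding phi_def sP[symmetric] by (simp add: sum_subtractf right_diff_distrib)
  also have "norm \<dots> \<le> (\<Sum>j<n. norm (complex_of_real (p j) * (iexp (s * x j) - P (s * x j))))"
    by (rule norm_sum)
  also have "\<dots> \<le> (\<Sum>j<n. p j * (\<bar>s\<bar>^3 * R * (x j)^2 / 6))"
  proof (rule sum_mono)
    fix j assume j: "j \<in> {..<n}"
    have "norm (complex_of_real (p j) * (iexp (s * x j) - P (s * x j))) = p j * cmod (iexp (s * x j) - P (s * x j))"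
      using pn j by (simp add: norm_mult)
    also have "\<dots> \<le> p j * (\<bar>s * x j\<bar>^3 / 6)"
      using pn j iexp_taylor2[of "s * x j"] by (intro mult_left_mono) (auto simp: P_def)
    also have "\<bar>s * x j\<bar>^3 = \<bar>s\<bar>^3 * (\<bar>x j\<bar> * (x j)^2)"
    proof -
      have "\<bar>x j\<bar>^3 = \<bar>x j\<bar> * (x j)^2"
        by (cases "x j \<ge> 0") (auto simp: power3_eq_cube power2_eq_square)
      then show ?thesis by (simp add: abs_mult power_mult_distrib)
    qed
    also have "\<dots> \<le> \<bar>s\<bar>^3 * (R * (x j)^2)"
      using xR j by (intro mult_left_mono mult_right_mono) auto
    finally show "norm (complex_of_real (p j) * (iexp (s * x j) - P (s * x j))) \<le> p j * (\<bar>s\<bar>^3 * R * (x j)^2 / 6)"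
      using pn j by (simp add: mult_left_mono mult.assoc divide_right_mono)
  qed
  also have "\<dots> = \<bar>s\<bar>^3 * R * (\<Sum>j<n. p j * (x j)^2) / 6"
    by (simp add: sum_distrib_left sum_divide_distrib mult_ac)
  finally show ?thesis .
qed

lemma mu_true_ge_min:
  fixes p q :: "nat \<Rightarrow> real"
  assumes pn: "\<And>j. j < n \<Longrightarrow> p j \<ge> 0" and ps: "(\<Sum>j<n. p j) = 1"
  shows "qsrt q n ! 0 \<le> mu_true p q n"
proof -
  have "(\<Sum>j<n. p j * qsrt q n ! 0) \<le> mu_true p q n" unfolding mu_true_def
    using pn qsrt_bounds(1) by (intro sum_mono mult_left_mono) auto
  moreover have "(\<Sum>j<n. p j * qsrt q n ! 0) = qsrt q n ! 0" using ps by (simp add: sum_distrib_right[symmetric])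
  ultimately show ?thesis by simp
qed

lemma set_facts:
  fixes p q :: "nat \<Rightarrow> real"
  assumes n2: "n \<ge> 2" and pn: "\<And>j. j < n \<Longrightarrow> p j \<ge> 0" and ps: "(\<Sum>j<n. p j) = 1"
  defines "x \<equiv> (\<lambda>j. q j - mu_true p q n)"
  shows "(\<Sum>j<n. p j * x j) = 0" "\<And>j. j < n \<Longrightarrow> \<bar>x j\<bar> \<le> Rng q n"
    "v2_true p q n = (\<Sum>j<n. p j * (x j)^2)" "v2_true p q n \<le> (Rng q n)^2" "Rng q n \<ge> 0"
proof -
  have "(\<Sum>j<n. p j * x j) = (\<Sum>j<n. p j * q j) - (\<Sum>j<n. mu_true p q n * p j)"
    unfolding x_def by (simp add: right_diff_distrib sum_subtractf mult.commute)
  also have "\<dots> = 0" using ps by (simp add: sum_distrib_left[symmetric] mu_true_def)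
  finally show "(\<Sum>j<n. p j * x j) = 0" .
  have lo: "qsrt q n ! 0 \<le> mu_true p q n" by (rule mu_true_ge_min[OF pn ps])
  have hi: "mu_true p q n \<le> qsrt q n ! (n - 1)" by (rule mu_true_le_max[OF pn ps])
  show xR: "\<bar>x j\<bar> \<le> Rng q n" if "j < n" for j
    using qsrt_bounds[OF that, of q] lo hi unfolding x_def Rng_def by linarith
  show vv: "v2_true p q n = (\<Sum>j<n. p j * (x j)^2)" unfolding x_def by (rule v2_true_var[OF ps])
  show "Rng q n \<ge> 0" using qsrt_mono[of 0 "n-1" n q] n2 by (simp add: Rng_def)
  have "(\<Sum>j<n. p j * (x j)^2) \<le> (\<Sum>j<n. p j * (Rng q n)^2)"
  proof (rule sum_mono)
    fix j assume j: "j \<in> {..<n}"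
    have "(x j)^2 \<le> (Rng q n)^2" using xR[of j] j by (simp add: abs_le_square_iff[symmetric] power2_abs abs_le_iff)
    then show "p j * (x j)^2 \<le> p j * (Rng q n)^2" using pn j by (intro mult_left_mono) auto
  qed
  also have "\<dots> = (Rng q n)^2" using ps by (simp add: sum_distrib_right[symmetric])
  finally show "v2_true p q n \<le> (Rng q n)^2" using vv by simp
qed

lemma char_close:
  fixes I :: nat and n :: "nat \<Rightarrow> nat" and q p :: "nat \<Rightarrow> nat \<Rightarrow> real" and t rho :: real
  assumes v: "validp I n p" and n2: "\<And>i. i < I \<Longrightarrow> n i \<ge> 2" and V: "Vf I n q p > 0"
    and rho: "rho = Max ((\<lambda>i. (Rng (q i) (n i))^2) ` {..<I}) / Vf I n q p"
    and tr: "t^2 * rho \<le> 2"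
  shows "norm (char (Mdist I n q p) t - complex_of_real (exp (- (t^2) / 2)))
         \<le> \<bar>t\<bar>^3 * sqrt rho / 6 + t^4 * rho / 8"
proof -
  define VV where "VV = Vf I n q p"
  define sd where "sd = sqrt VV"
  define s where "s = t / sd"
  define Rm where "Rm = Max ((\<lambda>i. (Rng (q i) (n i))^2) ` {..<I})"
  define mu where "mu i = mu_true (p i) (q i) (n i)" for i
  define x where "x i j = q i j - mu i" for i j
  define vi where "vi i = v2_true (p i) (q i) (n i)" for i
  define a where "a i = s^2 * vi i / 2" for i
  have VV0: "VV > 0" using V by (simp add: VV_def)
  have sd0: "sd > 0" using VV0 by (simp add: sd_def)
  have sdsq: "sd^2 = VV" using VV0 by (simp add: sd_def)
  have pn: "\<And>i j. i < I \<Longrightarrow> j < n i \<Longrightarrow> p i j \<ge> 0" and ps: "\<And>i. i < I \<Longrightarrow> (\<Sum>j<n i. p i j) = 1"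
    using v by (auto simp: validp_def)
  have I0: "I > 0"
  proof (rule ccontr)
    assume "\<not> I > 0" then have "VV = 0" by (simp add: VV_def Vf_def)
    then show False using VV0 by simp
  qed
  have m0: "(\<Sum>j<n i. p i j * x i j) = 0" if "i < I" for i
    using set_facts(1)[OF n2[OF that] pn[OF that] ps[OF that], where q="q i"] by (simp add: x_def mu_def)
  have xR: "\<bar>x i j\<bar> \<le> Rng (q i) (n i)" if "i < I" "j < n i" for i j
    using set_facts(2)[OF n2[OF that(1)] pn[OF that(1)] ps[OF that(1)], where q="q i"] that(2) by (auto simp: x_def mu_def)
  have vi_eq: "vi i = (\<Sum>j<n i. p i j * (x i j)^2)" if "i < I" for i
    using set_facts(3)[OF n2[OF that] pn[OF that] ps[OF that], where q="q i"] by (simp add: x_def mu_def vi_def)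
  have vi_le: "vi i \<le> (Rng (q i) (n i))^2" if "i < I" for i
    using set_facts(4)[OF n2[OF that] pn[OF that] ps[OF that], where q="q i"] by (simp add: vi_def)
  have R0: "Rng (q i) (n i) \<ge> 0" if "i < I" for i using set_facts(5)[OF n2[OF that] pn[OF that] ps[OF that], where q="q i"] .
  have vi0: "vi i \<ge> 0" if "i < I" for i
    using v2_true_nonneg[OF ps[OF that] pn[OF that]] by (simp add: vi_def)
  have RRm: "(Rng (q i) (n i))^2 \<le> Rm" if "i < I" for i
    unfolding Rm_def using that by (intro Max_ge) auto
  have Rm0: "Rm \<ge> 0" using RRm[of 0] I0 by (smt (verit) zero_le_power2)
  have Rsq: "Rng (q i) (n i) \<le> sqrt Rm" if "i < I" for i
    using RRm[OF that] R0[OF that] real_le_rsqrt by blast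
  have rho_eq: "rho = Rm / VV" by (simp add: rho Rm_def VV_def)
  have sumv: "(\<Sum>i<I. vi i) = VV" by (simp add: vi_def VV_def Vf_def)
  have suma: "(\<Sum>i<I. a i) = t^2 / 2"
  proof -
    have "(\<Sum>i<I. a i) = s^2 * (\<Sum>i<I. vi i) / 2"
      by (simp add: a_def sum_distrib_left sum_divide_distrib)
    also have "\<dots> = t^2 / 2" using sumv sdsq sd0 VV0 by (simp add: s_def power_divide)
    finally show ?thesis .
  qed
  have a0: "a i \<ge> 0" if "i < I" for i using vi0[OF that] by (simp add: a_def)
  have amax: "a i \<le> t^2 * rho / 2" if "i < I" for i
  proof -
    have "vi i \<le> Rm" using vi_le[OF that] RRm[OF that] by linarith
    then have "s^2 * vi i \<le> s^2 * Rm" by (intro mult_left_mono) auto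
    also have "s^2 * Rm = t^2 * rho" using sdsq sd0 by (simp add: s_def rho_eq power_divide)
    finally show ?thesis by (simp add: a_def)
  qed
  have a1: "a i \<le> 1" if "i < I" for i using amax[OF that] tr by linarith
  have ch: "char (Mdist I n q p) t = (\<Prod>i<I. phi (n i) (p i) (x i) s)"
    using char_Mdist[OF v, of q t] by (simp add: x_def[abs_def] mu_def s_def sd_def VV_def)
  have st1: "norm ((\<Prod>i<I. phi (n i) (p i) (x i) s) - (\<Prod>i<I. complex_of_real (1 - a i)))
      \<le> \<bar>t\<bar>^3 * sqrt rho / 6"
  proof -
    have "norm ((\<Prod>i<I. phi (n i) (p i) (x i) s) - (\<Prod>i<I. complex_of_real (1 - a i)))
        \<le> (\<Sum>i<I. norm (phi (n i) (p i) (x i) s - complex_of_real (1 - a i)))"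
    proof (rule norm_prod_diff)
      show "norm (phi (n i) (p i) (x i) s) \<le> 1" if "i \<in> {..<I}" for i
        using that phi_norm[OF pn ps] by auto
      show "norm (complex_of_real (1 - a i)) \<le> 1" if "i \<in> {..<I}" for i
        unfolding norm_of_real using that a0[of i] a1[of i] by auto
    qed
    also have "\<dots> \<le> (\<Sum>i<I. \<bar>s\<bar>^3 * sqrt Rm * vi i / 6)"
    proof (rule sum_mono)
      fix i assume i: "i \<in> {..<I}"
      then have i': "i < I" by simp
      have "norm (phi (n i) (p i) (x i) s - complex_of_real (1 - a i))
          \<le> \<bar>s\<bar>^3 * Rng (q i) (n i) * vi i / 6"
        using phi_approx[OF pn[OF i'] ps[OF i'] m0[OF i'] xR[OF i'], of s]
        by (simp add: a_def vi_eq[OF i'])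
      also have "\<dots> \<le> \<bar>s\<bar>^3 * sqrt Rm * vi i / 6"
        using Rsq[OF i'] vi0[OF i'] by (intro divide_right_mono mult_right_mono mult_left_mono) auto
      finally show "norm (phi (n i) (p i) (x i) s - complex_of_real (1 - a i)) \<le> \<bar>s\<bar>^3 * sqrt Rm * vi i / 6" .
    qed
    also have "\<dots> = \<bar>s\<bar>^3 * sqrt Rm * VV / 6"
      using sumv by (simp add: sum_distrib_left[symmetric] sum_divide_distrib[symmetric])
    also have "\<dots> = \<bar>t\<bar>^3 * sqrt rho / 6"
    proof -
      have "\<bar>s\<bar>^3 * VV = \<bar>t\<bar>^3 / sd"
        using sd0 sdsq VV0 by (simp add: s_def power_divide abs_divide power3_eq_cube power2_eq_square field_simps)
      moreover have "sqrt rho = sqrt Rm / sd" by (simp add: rho_eq sd_def real_sqrt_divide)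
      ultimately show ?thesis
      proof -
        assume h1: "\<bar>s\<bar>^3 * VV = \<bar>t\<bar>^3 / sd" and h2: "sqrt rho = sqrt Rm / sd"
        have "\<bar>s\<bar>^3 * sqrt Rm * VV / 6 = sqrt Rm * (\<bar>s\<bar>^3 * VV) / 6" by (simp add: mult_ac)
        also have "\<dots> = sqrt Rm * (\<bar>t\<bar>^3 / sd) / 6" by (simp only: h1)
        also have "\<dots> = \<bar>t\<bar>^3 * (sqrt Rm / sd) / 6" by simp
        finally show ?thesis by (simp only: h2)
      qed
    qed
    finally show ?thesis .
  qed
  have st2: "norm ((\<Prod>i<I. complex_of_real (1 - a i)) - complex_of_real (exp (- (t^2) / 2)))
      \<le> t^4 * rho / 8"
  proof -
    have pe: "(\<Prod>i<I. complex_of_real (exp (- a i))) = complex_of_real (exp (- (t^2) / 2))"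
    proof -
      have "(\<Prod>i<I. exp (- a i)) = exp (\<Sum>i<I. - a i)" by (simp add: exp_sum)
      also have "(\<Sum>i<I. - a i) = - (t^2) / 2" using suma by (simp add: sum_negf)
      finally have "(\<Prod>i<I. exp (- a i)) = exp (- (t^2) / 2)" .
      then show ?thesis by (simp flip: of_real_prod)
    qed
    have "norm ((\<Prod>i<I. complex_of_real (1 - a i)) - (\<Prod>i<I. complex_of_real (exp (- a i))))
        \<le> (\<Sum>i<I. norm (complex_of_real (1 - a i) - complex_of_real (exp (- a i))))"
    proof (rule norm_prod_diff)
      show "norm (complex_of_real (1 - a i)) \<le> 1" if "i \<in> {..<I}" for i
        unfolding norm_of_real using that a0[of i] a1[of i] by auto
      show "norm (complex_of_real (exp (- a i))) \<le> 1" if "i \<in> {..<I}" for i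
        using that a0 by auto
    qed
    also have "\<dots> \<le> (\<Sum>i<I. a i * (t^2 * rho / 2) / 2)"
    proof (rule sum_mono)
      fix i assume i: "i \<in> {..<I}"
      then have i': "i < I" by simp
      have "norm (complex_of_real (1 - a i) - complex_of_real (exp (- a i))) = \<bar>1 - a i - exp (- a i)\<bar>"
        by (simp flip: of_real_diff)
      also have "\<dots> \<le> (a i)^2 / 2" by (rule exp_quad[OF a0[OF i']])
      also have "(a i)^2 = a i * a i" by (simp add: power2_eq_square)
      also have "a i * a i \<le> a i * (t^2 * rho / 2)" using a0[OF i'] amax[OF i'] by (intro mult_left_mono) auto
      finally show "norm (complex_of_real (1 - a i) - complex_of_real (exp (- a i))) \<le> a i * (t^2 * rho / 2) / 2"
        by simp
    qed
    also have "\<dots> = (\<Sum>i<I. a i) * (t^2 * rho / 2) / 2"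
      by (simp add: sum_distrib_right sum_divide_distrib)
    also have "\<dots> = t^4 * rho / 8" using suma by (simp add: power2_eq_square power4_eq_xxxx)
    finally show ?thesis using pe by simp
  qed
  have "norm (char (Mdist I n q p) t - complex_of_real (exp (- (t^2) / 2)))
      \<le> norm ((\<Prod>i<I. phi (n i) (p i) (x i) s) - (\<Prod>i<I. complex_of_real (1 - a i)))
       + norm ((\<Prod>i<I. complex_of_real (1 - a i)) - complex_of_real (exp (- (t^2) / 2)))"
    unfolding ch using norm_triangle_ineq[of "(\<Prod>i<I. phi (n i) (p i) (x i) s) - (\<Prod>i<I. complex_of_real (1 - a i))"
        "(\<Prod>i<I. complex_of_real (1 - a i)) - complex_of_real (exp (- (t^2) / 2))"] by simp
  then show ?thesis using st1 st2 by linarith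
qed

lemma Phi_cont: "isCont Phi x"
proof -
  interpret N: real_distribution std_normal_distribution by (rule real_dist_normal_dist)
  have "emeasure std_normal_distribution {x} = (\<integral>\<^sup>+y. ennreal (std_normal_density y) * indicator {x} y \<partial>lborel)"
    by (subst emeasure_density) auto
  also have "\<dots> = 0"
    by (rule nn_integral_null_set) (simp add: null_sets_def)
  finally have "measure std_normal_distribution {x} = 0" by (simp add: measure_def)
  then show ?thesis unfolding Phi_def by (simp add: N.isCont_cdf)
qed

lemma prob_le_cdf:
  assumes v: "validp I n p" and V: "Vf I n q p > 0"
    and thr: "thr \<ge> ETf I n q p + c * sqrt (Vf I n q p)" and e: "\<epsilon> > 0"
  shows "prob_T_ge I n q p thr \<le> 1 - cdf (Mdist I n q p) (c - \<epsilon>)"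
proof -
  interpret M: real_distribution "Mdist I n q p" by (rule Mdist_real_distribution)
  have sub: "{z. thr \<le> (\<Sum>i<I. q i (z i))} \<subseteq> Sfun I n q p -` {c - \<epsilon><..}"
  proof
    fix z assume "z \<in> {z. thr \<le> (\<Sum>i<I. q i (z i))}"
    then have "c * sqrt (Vf I n q p) \<le> (\<Sum>i<I. q i (z i)) - ETf I n q p" using thr by simp
    then have "c \<le> ((\<Sum>i<I. q i (z i)) - ETf I n q p) / sqrt (Vf I n q p)"
      using V by (simp add: le_divide_eq)
    then show "z \<in> Sfun I n q p -` {c - \<epsilon><..}" using e by (simp add: Sfun_def)
  qed
  have "prob_T_ge I n q p thr = measure (measure_pmf (Qp I n p)) {z. thr \<le> (\<Sum>i<I. q i (z i))}"
    by (rule prob_T_ge_eq[OF v])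
  also have "\<dots> \<le> measure (measure_pmf (Qp I n p)) (Sfun I n q p -` {c - \<epsilon><..})"
    using sub by (intro measure_pmf.finite_measure_mono) auto
  also have "\<dots> = measure (Mdist I n q p) {c - \<epsilon><..}"
    unfolding Mdist_def by (subst measure_distr) auto
  also have "{c - \<epsilon><..} = space (Mdist I n q p) - {..c - \<epsilon>}" by (auto simp: Mdist_def)
  also have "measure (Mdist I n q p) (space (Mdist I n q p) - {..c - \<epsilon>}) = 1 - cdf (Mdist I n q p) (c - \<epsilon>)"
    by (subst M.prob_compl) (auto simp: cdf_def Mdist_def)
  finally show ?thesis .
qed

theorem theorem5:
  fixes n :: "nat \<Rightarrow> nat \<Rightarrow> nat"
    and q :: "nat \<Rightarrow> nat \<Rightarrow> nat \<Rightarrow> real"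
    and p :: "nat \<Rightarrow> nat \<Rightarrow> nat \<Rightarrow> real"
    and k :: "nat \<Rightarrow> nat"
    and G0 :: "nat \<Rightarrow> real"
    and Istar :: "nat \<Rightarrow> nat set"
    and Irank :: "nat \<Rightarrow> nat set"
  assumes n_ge2: "\<And>I i. I \<ge> 1 \<Longrightarrow> i < I \<Longrightarrow> n I i \<ge> 2"
    and p_nonneg: "\<And>I i j. I \<ge> 1 \<Longrightarrow> i < I \<Longrightarrow> j < n I i \<Longrightarrow> p I i j \<ge> 0"
    and p_sum: "\<And>I i. I \<ge> 1 \<Longrightarrow> i < I \<Longrightarrow> (\<Sum>j<n I i. p I i j) = 1"
    and k_range: "\<And>I. I \<ge> 1 \<Longrightarrow> 1 \<le> k I \<and> k I \<le> I"
    and G0_ge1: "\<And>I. I \<ge> 1 \<Longrightarrow> G0 I \<ge> 1"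
    and Gk_le: "\<And>I. I \<ge> 1 \<Longrightarrow>
        kth_smallest (map (\<lambda>i. GammaStar (p I i) (n I i)) [0..<I]) (k I) \<le> ereal (G0 I)"
    and Istar: "\<And>I. I \<ge> 1 \<Longrightarrow> is_Istar I (n I) (p I) (k I) (Istar I)"
    and Irank: "\<And>I. I \<ge> 1 \<Longrightarrow> is_Irank I (n I) (q I) (G0 I) (k I) (Irank I)"
    and A1_pos: "eventually (\<lambda>I. Ssum I (n I) (q I) (p I) > 0) sequentially"
    and A1: "(\<lambda>I. A1_ratio I (n I) (q I) (p I)) \<longlonglongrightarrow> 0"
    and A3: "(\<lambda>I. A3_quantity I (n I) (q I) (p I) (G0 I) (Istar I)) \<longlonglongrightarrow> \<infinity>"
    and A4: "(\<lambda>I. A4_quantity (n I) (q I) (G0 I) (Irank I) (Istar I)) \<longlonglongrightarrow> \<infinity>"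
  shows "\<forall>c::real. c \<ge> 0 \<longrightarrow>
     limsup (\<lambda>I. ereal (prob_T_ge I (n I) (q I) (p I)
        (mu_Gk I (n I) (q I) (G0 I) (Irank I) + c * sqrt (sigma2_Gk (n I) (q I) (G0 I) (Irank I)))))
     \<le> ereal (1 - Phi c)"
proof (intro allI impI)
  fix c :: real assume c0: "c \<ge> 0"
  define M where "M I = Mdist I (n I) (q I) (p I)" for I
  define V where "V I = Vf I (n I) (q I) (p I)" for I
  define Rm where "Rm I = Max ((\<lambda>i. (Rng (q I i) (n I i))^2) ` {..<I})" for I
  define rho where "rho I = Rm I / V I" for I
  define thr where "thr I = mu_Gk I (n I) (q I) (G0 I) (Irank I) + c * sqrt (sigma2_Gk (n I) (q I) (G0 I) (Irank I))" for I
  have valid: "validp I (n I) (p I)" if "I \<ge> 1" for I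
    unfolding validp_def using p_nonneg[OF that] p_sum[OF that] by auto
  have Vge: "Ssum I (n I) (q I) (p I) \<le> V I" if "I \<ge> 1" for I
    unfolding Ssum_def V_def Vf_def
    by (intro sum_mono wterm_le_v2_true) (use n_ge2[OF that] p_sum[OF that] p_nonneg[OF that] in auto)
  have Rm0: "Rm I \<ge> 0" if "I \<ge> 1" for I
  proof -
    have "(Rng (q I 0) (n I 0))^2 \<le> Rm I" unfolding Rm_def using that by (intro Max_ge) auto
    moreover have "0 \<le> (Rng (q I 0) (n I 0))^2" by simp
    ultimately show ?thesis by linarith
  qed
  have ev: "eventually (\<lambda>I. I \<ge> 1 \<and> Ssum I (n I) (q I) (p I) > 0 \<and>
      A3_quantity I (n I) (q I) (p I) (G0 I) (Istar I) > ereal c \<and>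
      A4_quantity (n I) (q I) (G0 I) (Irank I) (Istar I) > ereal c) sequentially"
  proof (intro eventually_conj)
    show "eventually (\<lambda>I. I \<ge> 1) sequentially" by (rule eventually_ge_at_top)
    show "eventually (\<lambda>I. Ssum I (n I) (q I) (p I) > 0) sequentially" by (rule A1_pos)
    show "eventually (\<lambda>I. A3_quantity I (n I) (q I) (p I) (G0 I) (Istar I) > ereal c) sequentially"
      by (rule order_tendstoD(1)[OF A3]) simp
    show "eventually (\<lambda>I. A4_quantity (n I) (q I) (G0 I) (Irank I) (Istar I) > ereal c) sequentially"
      by (rule order_tendstoD(1)[OF A4]) simp
  qed
  have ev2: "eventually (\<lambda>I. I \<ge> 1 \<and> V I > 0 \<and> thr I \<ge> ETf I (n I) (q I) (p I) + c * sqrt (V I)) sequentially"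
    using ev
  proof (rule eventually_mono)
    fix I assume h: "I \<ge> 1 \<and> Ssum I (n I) (q I) (p I) > 0 \<and>
      A3_quantity I (n I) (q I) (p I) (G0 I) (Istar I) > ereal c \<and>
      A4_quantity (n I) (q I) (G0 I) (Irank I) (Istar I) > ereal c"
    then have I1: "I \<ge> 1" by simp
    have "ETf I (n I) (q I) (p I) + c * sqrt (V I) \<le> thr I"
      unfolding ETf_def V_def Vf_def thr_def
      by (rule det[OF n_ge2[OF I1] p_nonneg[OF I1] p_sum[OF I1] _ _ G0_ge1[OF I1] Gk_le[OF I1]
            Istar[OF I1] Irank[OF I1]]) (use h k_range[OF I1] c0 in auto)
    moreover have "V I > 0" using Vge[OF I1] h by linarith
    ultimately show "I \<ge> 1 \<and> V I > 0 \<and> thr I \<ge> ETf I (n I) (q I) (p I) + c * sqrt (V I)" using I1 by simp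
  qed
  have rho0: "rho \<longlonglongrightarrow> 0"
  proof (rule tendsto_sandwich[OF _ _ tendsto_const A1])
    show "eventually (\<lambda>I. 0 \<le> rho I) sequentially"
      using ev2 by (rule eventually_mono) (auto simp: rho_def Rm0)
    show "eventually (\<lambda>I. rho I \<le> A1_ratio I (n I) (q I) (p I)) sequentially"
      using ev
    proof (rule eventually_mono)
      fix I assume h: "I \<ge> 1 \<and> Ssum I (n I) (q I) (p I) > 0 \<and>
        A3_quantity I (n I) (q I) (p I) (G0 I) (Istar I) > ereal c \<and>
        A4_quantity (n I) (q I) (G0 I) (Irank I) (Istar I) > ereal c"
      then have I1: "I \<ge> 1" and S0: "Ssum I (n I) (q I) (p I) > 0" by auto
      have "Rm I / V I \<le> Rm I / Ssum I (n I) (q I) (p I)"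
        using Vge[OF I1] S0 Rm0[OF I1] by (intro divide_left_mono mult_pos_pos) auto
      then show "rho I \<le> A1_ratio I (n I) (q I) (p I)" by (simp add: rho_def A1_ratio_def Rm_def)
    qed
  qed
  have charconv: "(\<lambda>I. char (M I) t) \<longlonglongrightarrow> char std_normal_distribution t" for t
  proof -
    define g where "g I = \<bar>t\<bar>^3 * sqrt (rho I) / 6 + t^4 * rho I / 8" for I
    have g0: "g \<longlonglongrightarrow> 0" unfolding g_def
      by (auto intro!: tendsto_eq_intros rho0)
    have "(\<lambda>I. t^2 * rho I) \<longlonglongrightarrow> t^2 * 0" by (intro tendsto_mult tendsto_const rho0)
    then have ev3: "eventually (\<lambda>I. t^2 * rho I < 2) sequentially" by (intro order_tendstoD(2)) auto
    have "eventually (\<lambda>I. norm (char (M I) t - complex_of_real (exp (- (t^2) / 2))) \<le> g I) sequentially"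
      using ev2 ev3
    proof (rule eventually_elim2)
      fix I assume h: "I \<ge> 1 \<and> V I > 0 \<and> thr I \<ge> ETf I (n I) (q I) (p I) + c * sqrt (V I)"
        and t2: "t^2 * rho I < 2"
      show "norm (char (M I) t - complex_of_real (exp (- (t^2) / 2))) \<le> g I"
        unfolding M_def g_def
        by (rule char_close[OF valid]) (use h t2 n_ge2 in \<open>auto simp: rho_def Rm_def V_def\<close>)
    qed
    then have "(\<lambda>I. char (M I) t - complex_of_real (exp (- (t^2) / 2))) \<longlonglongrightarrow> 0"
      using g0 by (rule Lim_null_comparison)
    then show ?thesis by (simp add: LIM_zero_iff char_std_normal_distribution)
  qed
  have weak: "weak_conv_m M std_normal_distribution"
    by (rule levy_continuity) (auto simp: M_def Mdist_real_distribution real_dist_normal_dist charconv[unfolded M_def])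
  have cdfconv: "(\<lambda>I. cdf (M I) x) \<longlonglongrightarrow> Phi x" for x
    using weak Phi_cont[of x] unfolding weak_conv_m_def weak_conv_def Phi_def by auto
  have bound: "limsup (\<lambda>I. ereal (prob_T_ge I (n I) (q I) (p I) (thr I))) \<le> ereal (1 - Phi (c - e))"
    if e: "e > 0" for e
  proof -
    have "eventually (\<lambda>I. ereal (prob_T_ge I (n I) (q I) (p I) (thr I)) \<le> ereal (1 - cdf (M I) (c - e))) sequentially"
      using ev2
    proof (rule eventually_mono)
      fix I assume h: "I \<ge> 1 \<and> V I > 0 \<and> thr I \<ge> ETf I (n I) (q I) (p I) + c * sqrt (V I)"
      show "ereal (prob_T_ge I (n I) (q I) (p I) (thr I)) \<le> ereal (1 - cdf (M I) (c - e))"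
        using prob_le_cdf[OF valid _ _ e] h by (simp add: M_def V_def)
    qed
    then have "limsup (\<lambda>I. ereal (prob_T_ge I (n I) (q I) (p I) (thr I))) \<le> limsup (\<lambda>I. ereal (1 - cdf (M I) (c - e)))"
      by (rule Limsup_mono)
    also have "limsup (\<lambda>I. ereal (1 - cdf (M I) (c - e))) = ereal (1 - Phi (c - e))"
      by (intro lim_imp_Limsup) (auto intro!: tendsto_intros cdfconv)
    finally show ?thesis .
  qed
  have lim: "(\<lambda>m. ereal (1 - Phi (c + - inverse (real (Suc m))))) \<longlonglongrightarrow> ereal (1 - Phi c)"
    by (intro tendsto_intros isCont_tendsto_compose[OF Phi_cont] LIMSEQ_inverse_real_of_nat_add_minus)
  have "limsup (\<lambda>I. ereal (prob_T_ge I (n I) (q I) (p I) (thr I))) \<le> ereal (1 - Phi c)"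
    using lim
  proof (rule LIMSEQ_le_const)
    show "\<exists>N. \<forall>m\<ge>N. limsup (\<lambda>I. ereal (prob_T_ge I (n I) (q I) (p I) (thr I))) \<le> ereal (1 - Phi (c + - inverse (real (Suc m))))"
      using bound[of "inverse (real (Suc _))"] by auto
  qed
  then show "limsup (\<lambda>I. ereal (prob_T_ge I (n I) (q I) (p I)
        (mu_Gk I (n I) (q I) (G0 I) (Irank I) + c * sqrt (sigma2_Gk (n I) (q I) (G0 I) (Irank I)))))
     \<le> ereal (1 - Phi c)" by (simp add: thr_def)
qed

end
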